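(* Consider a stochastic $A$-armed bandit with reward distributions supported in $[0,1]$, mean reward vector $r\in[0,1]^A$, optimal arm $a^*$, optimal (deterministic) policy $\pi^*$, and $\Delta:=\min_{a\ne a'}|r(a)-r(a')|$; set $\varrho=\frac{8A^{3/2}}{\Delta^2}$. Run stochastic softmax policy gradient $\theta_{t+1}=\theta_t+\eta_t\hat g(\theta_t)$, where at iteration $t$ an arm $a_t\sim\pi_{\theta_t}$ is pulled, a reward $R_t\sim P_{a_t}$ is observed, $\hat r_t(a)=\frac{\mathbb{I}\{a_t=a\}}{\pi_{\theta_t}(a)}R_t$ and $\hat g(\theta_t)(a)=\pi_{\theta_t}(a)[\hat r_t(a)-\langle\pi_{\theta_t},\hat r_t\rangle]$, with step-sizes $\eta_t=\eta_0\alpha^t$, $\eta_0\le\frac1{18}$, $\alpha=(\beta/T)^{1/T}$, $\beta\ge1$. Let $\epsilon\in(0,1)$ and suppose $\mu:=\Big[\mathbb{E}\big[\max_{t\in[1,T]}[\pi_{\theta_t}(a^* )]^{-2}\big]\Big]^{-1}>0$. If $\mathbb{E}[(\pi^*-\pi_{\theta_t})^\top r]\ge\epsilon$ for all $t\in[1,T]$, then $$\mathbb{E}[(\pi^*-\pi_{\theta_{T+1}})^\top r]\le\mathbb{E}[(\pi^*-\pi_{\theta_1})^\top r]\,C_1\exp\Big(-\frac{\alpha\,\epsilon\,T}{\kappa\ln(T/\beta)}\Big)+\frac{C_2\sum_{t=1}^{T_0-1}\mathbb{E}[(\pi^*-\pi_{\theta_t})^\top r]}{\epsilon^2T^2},$$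 where $\kappa:=\frac{2}{\mu\eta_0}$, $C_1:=\exp\big(\frac{2\beta}{\kappa\ln(T/\beta)}\big)$, $C_2:=\exp\big(\frac{2\beta}{\kappa\ln(T/\beta)}\big)\frac{32\varrho\kappa^2}{5e^2\alpha^2}\ln^2(T/\beta)$, $T_0:=T\max\big\{\frac{\ln(4\varrho\eta_0)}{\ln(T/\beta)},0\big\}$. Otherwise $\min_{t\in[1,T]}\mathbb{E}[(\pi^*-\pi_{\theta_t})^\top r]\le\epsilon$.
   Context: $\pi_\theta(a)=\exp(\theta(a))/\sum_{a'}\exp(\theta(a'))$ is the softmax policy over arms, $\pi^*$ is the indicator vector of $a^*=\arg\max_a r(a)$. Expectations are over the randomness of arm pulls and rewards. *)

theory Defs
  imports "HOL-Probability.Probability"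
begin

definition softmax :: "('a::finite \<Rightarrow> real) \<Rightarrow> 'a \<Rightarrow> real" where
  "softmax \<theta> a = exp (\<theta> a) / (\<Sum>b\<in>UNIV. exp (\<theta> b))"

definition pistar :: "'a \<Rightarrow> 'a \<Rightarrow> real" where
  "pistar astar a = (if a = astar then 1 else 0)"

definition subopt :: "('a::finite \<Rightarrow> real) \<Rightarrow> 'a \<Rightarrow> ('a \<Rightarrow> real) \<Rightarrow> real" where
  "subopt r astar \<theta> = (\<Sum>a\<in>UNIV. (pistar astar a - softmax \<theta> a) * r a)"

definition rhat :: "('a::finite \<Rightarrow> real) \<Rightarrow> 'a \<Rightarrow> real \<Rightarrow> 'a \<Rightarrow> real" where
  "rhat \<theta> b0 R a = (if b0 = a then 1 else 0) / softmax \<theta> a * R"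

definition ghat :: "('a::finite \<Rightarrow> real) \<Rightarrow> 'a \<Rightarrow> real \<Rightarrow> 'a \<Rightarrow> real" where
  "ghat \<theta> b0 R a = softmax \<theta> a *
     (rhat \<theta> b0 R a - (\<Sum>b\<in>UNIV. softmax \<theta> b * rhat \<theta> b0 R b))"

definition reward_gap :: "('a::finite \<Rightarrow> real) \<Rightarrow> real" where
  "reward_gap r = Min {\<bar>r a - r b\<bar> | a b. a \<noteq> b}"

end

theory Submission
  imports Defs
begin

definition avg :: "('a::finite \<Rightarrow> real) \<Rightarrow> ('a \<Rightarrow> real) \<Rightarrow> real" where
  "avg \<theta> h = (\<Sum>a\<in>UNIV. softmax \<theta> a * h a)"

lemma Z_pos: "(\<Sum>b\<in>(UNIV::'a::finite set). exp ((\<theta>::'a \<Rightarrow> real) b)) > 0"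
  by (rule sum_pos) auto

lemma softmax_pos: "softmax \<theta> a > 0"
  unfolding softmax_def by (intro divide_pos_pos exp_gt_zero Z_pos)

lemma softmax_sum: "(\<Sum>a\<in>UNIV. softmax \<theta> a) = 1"
  unfolding softmax_def using Z_pos[of \<theta>] by (simp add: sum_divide_distrib[symmetric])

lemma avg_alt: "avg \<theta> h = (\<Sum>a\<in>UNIV. exp (\<theta> a) * h a) / (\<Sum>a\<in>UNIV. exp (\<theta> a))"
  unfolding avg_def softmax_def by (simp add: sum_divide_distrib)

lemma avg_deriv:
  fixes \<theta> v h :: "'a::finite \<Rightarrow> real"
  shows "((\<lambda>s. avg (\<lambda>a. \<theta> a + s * v a) h) has_real_derivative
     (avg (\<lambda>a. \<theta> a + x * v a) (\<lambda>a. h a * v a) - avg (\<lambda>a. \<theta> a + x * v a) h * avg (\<lambda>a. \<theta> a + x * v a) v)) (at x)"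
proof -
  define N where "N = (\<lambda>s. \<Sum>a\<in>UNIV. exp (\<theta> a + s * v a) * h a)"
  define Z where "Z = (\<lambda>s. \<Sum>a\<in>UNIV. exp (\<theta> a + s * v a))"
  define N' where "N' = (\<lambda>s. \<Sum>a\<in>UNIV. exp (\<theta> a + s * v a) * (h a * v a))"
  define Z' where "Z' = (\<lambda>s. \<Sum>a\<in>UNIV. exp (\<theta> a + s * v a) * v a)"
  have N: "(N has_real_derivative N' x) (at x)"
    unfolding N_def N'_def
    by (auto intro!: derivative_eq_intros sum.cong simp: algebra_simps)
  have Z: "(Z has_real_derivative Z' x) (at x)"
    unfolding Z_def Z'_def
    by (auto intro!: derivative_eq_intros sum.cong simp: algebra_simps)
  have Zp: "Z x > 0" unfolding Z_def by (rule sum_pos) auto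
  have D: "((\<lambda>s. N s / Z s) has_real_derivative (N' x * Z x - N x * Z' x) / (Z x * Z x)) (at x)"
    using DERIV_divide[OF N Z] Zp by simp
  have eq: "\<And>s h. avg (\<lambda>a. \<theta> a + s * v a) h = (\<Sum>a\<in>UNIV. exp (\<theta> a + s * v a) * h a) / (\<Sum>a\<in>UNIV. exp (\<theta> a + s * v a))"
    by (simp add: avg_alt)
  have "(N' x * Z x - N x * Z' x) / (Z x * Z x) = N' x / Z x - (N x / Z x) * (Z' x / Z x)"
    using Zp by (simp add: field_simps)
  also have "\<dots> = avg (\<lambda>a. \<theta> a + x * v a) (\<lambda>a. h a * v a) - avg (\<lambda>a. \<theta> a + x * v a) h * avg (\<lambda>a. \<theta> a + x * v a) v"
    unfolding eq N_def Z_def N'_def Z'_def by simp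
  finally show ?thesis using D unfolding eq N_def Z_def by simp
qed

lemma avg_const[simp]: "avg \<theta> (\<lambda>a. k) = k"
  unfolding avg_def by (simp add: sum_distrib_right[symmetric] softmax_sum)

lemma avg_add: "avg \<theta> (\<lambda>a. f a + g a) = avg \<theta> f + avg \<theta> g"
  unfolding avg_def by (simp add: sum.distrib algebra_simps)

lemma avg_diff: "avg \<theta> (\<lambda>a. f a - g a) = avg \<theta> f - avg \<theta> g"
  unfolding avg_def by (simp add: sum_subtractf algebra_simps)

lemma avg_cmult: "avg \<theta> (\<lambda>a. k * f a) = k * avg \<theta> f"
  unfolding avg_def by (simp add: sum_distrib_left algebra_simps)

lemma avg_mono: "(\<And>a. f a \<le> g a) \<Longrightarrow> avg \<theta> f \<le> avg \<theta> g"
  unfolding avg_def by (intro sum_mono mult_left_mono) (auto intro: less_imp_le softmax_pos)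

lemma avg_nonneg: "(\<And>a. 0 \<le> f a) \<Longrightarrow> 0 \<le> avg \<theta> f"
  using avg_mono[of "\<lambda>a. 0" f \<theta>] by simp

lemma avg_var_min: "avg \<theta> (\<lambda>a. (v a - avg \<theta> v)^2) \<le> avg \<theta> (\<lambda>a. (v a - c)^2)"
proof -
  have "avg \<theta> (\<lambda>a. (v a - c)^2) = avg \<theta> (\<lambda>a. (v a - avg \<theta> v)^2 + 2 * (avg \<theta> v - c) * (v a - avg \<theta> v) + (avg \<theta> v - c)^2)"
    by (rule arg_cong[where f="avg \<theta>"]) (auto simp: power2_eq_square algebra_simps)
  also have "\<dots> = avg \<theta> (\<lambda>a. (v a - avg \<theta> v)^2) + (avg \<theta> v - c)^2"
    by (simp add: avg_add avg_cmult avg_diff)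
  finally show ?thesis by simp
qed

lemma third_moment_id:
  "avg \<theta> (\<lambda>a. r a * v a * v a) - avg \<theta> (\<lambda>a. r a * v a) * avg \<theta> v
     - ((avg \<theta> (\<lambda>a. r a * v a) - avg \<theta> r * avg \<theta> v) * avg \<theta> v
        + avg \<theta> r * (avg \<theta> (\<lambda>a. v a * v a) - avg \<theta> v * avg \<theta> v))
   = avg \<theta> (\<lambda>a. (r a - avg \<theta> r) * (v a - avg \<theta> v)^2)"
proof -
  define F where "F = avg \<theta> r"
  define m where "m = avg \<theta> v"
  have "avg \<theta> (\<lambda>a. (r a - F) * (v a - m)^2) = avg \<theta> (\<lambda>a. r a * v a * v a + (- 2 * m) * (r a * v a) + (m^2) * r a + (- F) * (v a * v a) + (2 * F * m) * v a + (- F * m^2))"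
    by (rule arg_cong[where f="avg \<theta>"]) (auto simp: power2_eq_square algebra_simps)
  also have "\<dots> = avg \<theta> (\<lambda>a. r a * v a * v a) - 2 * m * avg \<theta> (\<lambda>a. r a * v a) + m^2 * F - F * avg \<theta> (\<lambda>a. v a * v a) + 2 * F * m * m - F * m^2"
    by (simp only: avg_add avg_cmult avg_const F_def m_def)
  finally show ?thesis unfolding F_def[symmetric] m_def[symmetric] by (simp add: power2_eq_square algebra_simps)
qed

lemma softmax_shift_le:
  fixes \<theta> v :: "'a::finite \<Rightarrow> real"
  assumes "\<And>a. \<bar>v a\<bar> \<le> c" "0 \<le> t" "t \<le> 1"
  shows "softmax (\<lambda>a. \<theta> a + t * v a) a \<le> exp (2 * c) * softmax \<theta> a"
proof -
  have tv: "\<bar>t * v b\<bar> \<le> c" for b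
    using assms by (auto simp: abs_mult intro: order_trans[OF mult_left_le_one_le])
  have num: "exp (\<theta> a + t * v a) \<le> exp (\<theta> a) * exp c"
    using tv[of a] by (simp add: exp_add[symmetric])
  have den: "exp (- c) * (\<Sum>b\<in>UNIV. exp (\<theta> b)) \<le> (\<Sum>b\<in>UNIV. exp (\<theta> b + t * v b))"
    unfolding sum_distrib_left
  proof (rule sum_mono)
    fix b show "exp (- c) * exp (\<theta> b) \<le> exp (\<theta> b + t * v b)"
      using tv[of b] by (simp add: exp_add[symmetric])
  qed
  have Zp: "(\<Sum>b\<in>UNIV. exp (\<theta> b)) > 0" by (rule Z_pos)
  have "softmax (\<lambda>a. \<theta> a + t * v a) a = exp (\<theta> a + t * v a) / (\<Sum>b\<in>UNIV. exp (\<theta> b + t * v b))"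
    by (simp add: softmax_def)
  also have "\<dots> \<le> (exp (\<theta> a) * exp c) / (exp (- c) * (\<Sum>b\<in>UNIV. exp (\<theta> b)))"
    by (rule frac_le) (use num den Zp in auto)
  also have "\<dots> = exp (2 * c) * softmax \<theta> a"
    by (simp add: softmax_def exp_minus field_simps exp_add[symmetric])
  finally show ?thesis .
qed

lemma avg_shift_le:
  fixes \<theta> v f :: "'a::finite \<Rightarrow> real"
  assumes "\<And>a. \<bar>v a\<bar> \<le> c" "0 \<le> t" "t \<le> 1" "\<And>a. 0 \<le> f a"
  shows "avg (\<lambda>a. \<theta> a + t * v a) f \<le> exp (2 * c) * avg \<theta> f"
  unfolding avg_def sum_distrib_left
proof (rule sum_mono)
  fix a
  have "softmax (\<lambda>a. \<theta> a + t * v a) a * f a \<le> (exp (2 * c) * softmax \<theta> a) * f a"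
    by (rule mult_right_mono[OF softmax_shift_le]) (use assms in auto)
  then show "softmax (\<lambda>a. \<theta> a + t * v a) a * f a \<le> exp (2 * c) * (softmax \<theta> a * f a)"
    by simp
qed

lemma taylor_avg:
  fixes \<theta> v r :: "'a::finite \<Rightarrow> real"
  assumes r0: "\<And>a. 0 \<le> r a" and r1: "\<And>a. r a \<le> 1" and vb: "\<And>a. \<bar>v a\<bar> \<le> c"
  shows "avg (\<lambda>a. \<theta> a + v a) r \<ge> avg \<theta> r + (avg \<theta> (\<lambda>a. r a * v a) - avg \<theta> r * avg \<theta> v)
            - exp (2*c)/2 * avg \<theta> (\<lambda>a. (v a - avg \<theta> v)^2)"
proof -
  define th where "th s = (\<lambda>a. \<theta> a + s * v a)" for s
  define D2 where "D2 s = avg (th s) (\<lambda>a. r a * v a * v a) - avg (th s) (\<lambda>a. r a * v a) * avg (th s) v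
     - ((avg (th s) (\<lambda>a. r a * v a) - avg (th s) r * avg (th s) v) * avg (th s) v
        + (avg (th s) (\<lambda>a. v a * v a) - avg (th s) v * avg (th s) v) * avg (th s) r)" for s
  define diff where "diff n s = (if n = 0 then avg (th s) r else if n = 1 then
      avg (th s) (\<lambda>a. r a * v a) - avg (th s) r * avg (th s) v else if n = 2 then D2 s else 0)" for n :: nat and s
  have d0: "diff 0 = (\<lambda>s. avg (th s) r)" by (rule ext) (simp add: diff_def)
  have dS: "\<forall>m t. m < 2 \<and> 0 \<le> t \<and> t \<le> 1 \<longrightarrow> DERIV (diff m) t :> diff (Suc m) t"
  proof (intro allI impI)
    fix m :: nat and t :: real assume "m < 2 \<and> 0 \<le> t \<and> t \<le> 1"
    then consider "m = 0" | "m = 1" by linarith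
    then show "DERIV (diff m) t :> diff (Suc m) t"
    proof cases
      case 1
      have "diff m = (\<lambda>s. avg (\<lambda>a. \<theta> a + s * v a) r)" using 1 by (simp add: d0 th_def)
      moreover have "diff (Suc m) t = avg (\<lambda>a. \<theta> a + t * v a) (\<lambda>a. r a * v a) - avg (\<lambda>a. \<theta> a + t * v a) r * avg (\<lambda>a. \<theta> a + t * v a) v"
        using 1 by (simp add: diff_def th_def)
      ultimately show ?thesis using avg_deriv[of \<theta> v r t] by simp
    next
      case 2
      have e1: "diff m = (\<lambda>s. avg (\<lambda>a. \<theta> a + s * v a) (\<lambda>a. r a * v a) - avg (\<lambda>a. \<theta> a + s * v a) r * avg (\<lambda>a. \<theta> a + s * v a) v)"
        using 2 by (intro ext) (simp add: diff_def th_def)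
      have e2: "diff (Suc m) t = D2 t" using 2 by (simp add: diff_def)
      show ?thesis unfolding e1 e2 D2_def th_def
        using DERIV_diff[OF avg_deriv[of \<theta> v "\<lambda>a. r a * v a" t] DERIV_mult[OF avg_deriv[of \<theta> v r t] avg_deriv[of \<theta> v v t]]]
        by simp
    qed
  qed
  obtain t where t: "0 < t" "t < 1"
    and eq: "(\<lambda>s. avg (th s) r) 1 = (\<Sum>m<2. diff m 0 / fact m * 1 ^ m) + diff 2 t / fact 2 * 1 ^ 2"
    using Maclaurin[of 1 2 diff "\<lambda>s. avg (th s) r", OF _ _ d0 dS] by auto
  have th0: "th 0 = \<theta>" by (simp add: th_def)
  have th1: "th 1 = (\<lambda>a. \<theta> a + v a)" by (simp add: th_def)
  have eq2: "avg (\<lambda>a. \<theta> a + v a) r = avg \<theta> r + (avg \<theta> (\<lambda>a. r a * v a) - avg \<theta> r * avg \<theta> v) + D2 t / 2"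
    using eq by (simp add: th0 th1 diff_def numeral_2_eq_2)
  define m0 where "m0 = avg \<theta> v"
  have "D2 t = avg (th t) (\<lambda>a. (r a - avg (th t) r) * (v a - avg (th t) v)^2)"
    unfolding D2_def using third_moment_id[of "th t" r v] by (simp add: mult.commute)
  also have "\<dots> \<ge> avg (th t) (\<lambda>a. - ((v a - avg (th t) v)^2))"
  proof (rule avg_mono)
    fix a
    have F1: "avg (th t) r \<le> 1" using avg_mono[of r "\<lambda>a. 1" "th t"] r1 by simp
    have "- 1 \<le> r a - avg (th t) r" using F1 r0[of a] by simp
    then show "- ((v a - avg (th t) v)^2) \<le> (r a - avg (th t) r) * (v a - avg (th t) v)^2"
      using mult_right_mono[of "-1" "r a - avg (th t) r" "(v a - avg (th t) v)^2"] by simp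
  qed
  finally have "D2 t \<ge> - avg (th t) (\<lambda>a. (v a - avg (th t) v)^2)"
    using avg_cmult[of "th t" "-1" "\<lambda>a. (v a - avg (th t) v)^2"] by simp
  moreover have "avg (th t) (\<lambda>a. (v a - avg (th t) v)^2) \<le> avg (th t) (\<lambda>a. (v a - m0)^2)"
    by (rule avg_var_min)
  moreover have "avg (th t) (\<lambda>a. (v a - m0)^2) \<le> exp (2 * c) * avg \<theta> (\<lambda>a. (v a - m0)^2)"
    unfolding th_def by (rule avg_shift_le) (use vb t in auto)
  ultimately have "D2 t \<ge> - exp (2 * c) * avg \<theta> (\<lambda>a. (v a - m0)^2)" by linarith
  then show ?thesis using eq2 unfolding m0_def by simp
qed

definition wv :: "('a::finite \<Rightarrow> real) \<Rightarrow> 'a \<Rightarrow> 'a \<Rightarrow> real" where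
  "wv \<theta> b = (\<lambda>a. (if b = a then 1 else 0) - softmax \<theta> a)"

definition psi :: "('a::finite \<Rightarrow> real) \<Rightarrow> ('a \<Rightarrow> real) \<Rightarrow> 'a \<Rightarrow> real" where
  "psi r \<theta> b = avg \<theta> (\<lambda>a. r a * wv \<theta> b a) - avg \<theta> r * avg \<theta> (wv \<theta> b)"

definition varb :: "('a::finite \<Rightarrow> real) \<Rightarrow> 'a \<Rightarrow> real" where
  "varb \<theta> b = avg \<theta> (\<lambda>a. (wv \<theta> b a - avg \<theta> (wv \<theta> b))^2)"

definition gradsq :: "('a::finite \<Rightarrow> real) \<Rightarrow> ('a \<Rightarrow> real) \<Rightarrow> real" where
  "gradsq r \<theta> = (\<Sum>a\<in>UNIV. (softmax \<theta> a)^2 * (r a - avg \<theta> r)^2)"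

lemma avg_delta: "avg \<theta> (\<lambda>a. if b = a then 1 else 0) = softmax \<theta> b"
  unfolding avg_def by (simp add: if_distrib cong: if_cong)

lemma avg_delta_mult: "avg \<theta> (\<lambda>a. (if b = a then 1 else 0) * f a) = softmax \<theta> b * f b"
proof -
  have "avg \<theta> (\<lambda>a. (if b = a then 1 else 0) * f a) = (\<Sum>a\<in>UNIV. if b = a then softmax \<theta> a * f a else 0)"
    unfolding avg_def by (rule sum.cong) auto
  then show ?thesis by simp
qed

lemma psi_eq: "psi r \<theta> b = softmax \<theta> b * (r b - avg \<theta> r) - (\<Sum>a\<in>UNIV. (softmax \<theta> a)^2 * (r a - avg \<theta> r))"
proof -
  have 1: "avg \<theta> (wv \<theta> b) = softmax \<theta> b - (\<Sum>a\<in>UNIV. (softmax \<theta> a)^2)"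
    unfolding wv_def avg_diff avg_delta by (simp add: avg_def power2_eq_square)
  have 2: "avg \<theta> (\<lambda>a. r a * wv \<theta> b a) = softmax \<theta> b * r b - (\<Sum>a\<in>UNIV. (softmax \<theta> a)^2 * r a)"
  proof -
    have "avg \<theta> (\<lambda>a. r a * wv \<theta> b a) = avg \<theta> (\<lambda>a. (if b = a then 1 else 0) * r a - softmax \<theta> a * r a)"
      unfolding wv_def by (rule arg_cong[where f="avg \<theta>"]) (auto simp: algebra_simps)
    also have "\<dots> = softmax \<theta> b * r b - (\<Sum>a\<in>UNIV. (softmax \<theta> a)^2 * r a)"
      unfolding avg_diff avg_delta_mult by (simp add: avg_def power2_eq_square mult.assoc)
    finally show ?thesis .
  qed
  show ?thesis unfolding psi_def 1 2
    by (simp add: algebra_simps sum_subtractf sum_distrib_left sum_distrib_right)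
qed

lemma grad_identity: "avg \<theta> (\<lambda>b. r b * psi r \<theta> b) = gradsq r \<theta>"
proof -
  define F where "F = avg \<theta> r"
  define Q where "Q = (\<Sum>a\<in>UNIV. (softmax \<theta> a)^2 * (r a - F))"
  have "avg \<theta> (\<lambda>b. r b * psi r \<theta> b) = avg \<theta> (\<lambda>b. r b * (softmax \<theta> b * (r b - F)) - Q * r b)"
    unfolding psi_eq F_def[symmetric] Q_def[symmetric] by (rule arg_cong[where f="avg \<theta>"]) (auto simp: algebra_simps)
  also have "\<dots> = (\<Sum>b\<in>UNIV. (softmax \<theta> b)^2 * r b * (r b - F)) - Q * F"
    unfolding avg_diff avg_cmult F_def by (simp add: avg_def power2_eq_square mult_ac)
  also have "\<dots> = (\<Sum>b\<in>UNIV. (softmax \<theta> b)^2 * (r b - F)^2)"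
  proof -
    have "(\<Sum>b\<in>UNIV. (softmax \<theta> b)^2 * (r b - F)^2) = (\<Sum>b\<in>UNIV. (softmax \<theta> b)^2 * r b * (r b - F) - F * ((softmax \<theta> b)^2 * (r b - F)))"
      by (rule sum.cong) (auto simp: power2_eq_square algebra_simps)
    also have "\<dots> = (\<Sum>b\<in>UNIV. (softmax \<theta> b)^2 * r b * (r b - F)) - Q * F"
      unfolding sum_subtractf Q_def by (simp add: sum_distrib_left mult_ac)
    finally show ?thesis by simp
  qed
  finally show ?thesis unfolding gradsq_def F_def .
qed

lemma avg_swap: "avg \<theta> (\<lambda>b. avg \<theta> (\<lambda>a. f a b)) = avg \<theta> (\<lambda>a. avg \<theta> (\<lambda>b. f a b))"
  unfolding avg_def sum_distrib_left by (subst sum.swap) (simp add: mult_ac)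

lemma avg_delta': "avg \<theta> (\<lambda>x. if x = c then k else 0) = softmax \<theta> c * k"
proof -
  have "avg \<theta> (\<lambda>x. if x = c then k else 0) = (\<Sum>x\<in>UNIV. if x = c then softmax \<theta> c * k else 0)"
    unfolding avg_def by (rule sum.cong) auto
  then show ?thesis by simp
qed

lemma sum_remove_UNIV: "(\<Sum>a\<in>(UNIV::'a::finite set). f a) = f a0 + (\<Sum>a\<in>UNIV-{a0}. f a)"
  by (rule sum.remove) auto

lemma noise_bound:
  fixes r :: "'a::finite \<Rightarrow> real"
  assumes gap: "\<And>a b. a \<noteq> b \<Longrightarrow> \<Delta> \<le> \<bar>r a - r b\<bar>" and Dpos: "\<Delta> > 0" and card2: "CARD('a) \<ge> 2"
  shows "avg \<theta> (varb \<theta>) \<le> 16 * (real CARD('a) - 1) / \<Delta>^2 * gradsq r \<theta>"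
proof -
  define p where "p = softmax \<theta>"
  define F where "F = avg \<theta> r"
  have pnn: "0 \<le> p a" for a unfolding p_def using softmax_pos[of \<theta> a] by simp
  define m where "m = Min ((\<lambda>a. \<bar>r a - F\<bar>) ` UNIV)"
  have "m \<in> (\<lambda>a. \<bar>r a - F\<bar>) ` UNIV" unfolding m_def by (rule Min_in) auto
  then obtain a0 where a0m: "\<bar>r a0 - F\<bar> = m" by auto
  have a0: "\<bar>r a0 - F\<bar> \<le> \<bar>r a - F\<bar>" for a unfolding a0m m_def by (rule Min_le) auto
  define \<delta> where "\<delta> = 1 - p a0"
  have psum: "(\<Sum>a\<in>UNIV. p a) = 1" unfolding p_def by (rule softmax_sum)
  have rest: "(\<Sum>a\<in>UNIV-{a0}. p a) = \<delta>"
    using psum sum_remove_UNIV[of p a0] unfolding \<delta>_def by simp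
  have pa_le: "p a \<le> \<delta>" if "a \<noteq> a0" for a
  proof -
    have "p a \<le> (\<Sum>a\<in>UNIV-{a0}. p a)" by (rule member_le_sum) (use that pnn in auto)
    then show ?thesis using rest by simp
  qed
  have dnn: "0 \<le> \<delta>" using rest pnn by (metis sum_nonneg)
  have far: "\<Delta> / 2 \<le> \<bar>r a - F\<bar>" if "a \<noteq> a0" for a
  proof -
    have "\<Delta> \<le> \<bar>r a - r a0\<bar>" using gap that by auto
    also have "\<dots> \<le> \<bar>r a - F\<bar> + \<bar>r a0 - F\<bar>" by simp
    also have "\<dots> \<le> 2 * \<bar>r a - F\<bar>" using a0[of a] by simp
    finally show ?thesis by simp
  qed
  have step1: "varb \<theta> b \<le> avg \<theta> (\<lambda>a. (wv \<theta> b a - wv \<theta> b a0)^2)" for b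
    unfolding varb_def by (rule avg_var_min)
  have inner: "avg \<theta> (\<lambda>b. (wv \<theta> b a - wv \<theta> b a0)^2) \<le> (if a = a0 then 0 else 3 * p a + \<delta>)" for a
  proof (cases "a = a0")
    case True then show ?thesis by simp
  next
    case False
    define e where "e = p a0 - p a"
    have pw: "(wv \<theta> b a - wv \<theta> b a0)^2 = (if b = a then 1 + 2 * e else 0) + (if b = a0 then 1 - 2 * e else 0) + e^2" for b
      using False unfolding wv_def e_def p_def by (auto simp: power2_eq_square algebra_simps)
    have "avg \<theta> (\<lambda>b. (wv \<theta> b a - wv \<theta> b a0)^2) = p a * (1 + 2 * e) + p a0 * (1 - 2 * e) + e^2"
      unfolding pw avg_add avg_delta' avg_const p_def by simp
    also have "\<dots> = 3 * p a + \<delta> - (\<delta> + p a)^2"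
      unfolding e_def \<delta>_def by (simp add: power2_eq_square algebra_simps)
    also have "\<dots> \<le> 3 * p a + \<delta>" by simp
    finally show ?thesis using False by simp
  qed
  have "avg \<theta> (varb \<theta>) \<le> avg \<theta> (\<lambda>b. avg \<theta> (\<lambda>a. (wv \<theta> b a - wv \<theta> b a0)^2))"
    by (rule avg_mono) (rule step1)
  also have "\<dots> = avg \<theta> (\<lambda>a. avg \<theta> (\<lambda>b. (wv \<theta> b a - wv \<theta> b a0)^2))"
    by (rule avg_swap)
  also have "\<dots> \<le> avg \<theta> (\<lambda>a. if a = a0 then 0 else 3 * p a + \<delta>)"
    by (rule avg_mono) (rule inner)
  also have "\<dots> = (\<Sum>a\<in>UNIV-{a0}. p a * (3 * p a + \<delta>))"
    unfolding avg_def p_def[symmetric] by (subst sum_remove_UNIV[of _ a0]) (auto intro!: sum.cong)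
  also have "\<dots> \<le> (\<Sum>a\<in>UNIV-{a0}. p a * (4 * \<delta>))"
    by (rule sum_mono) (auto intro!: mult_left_mono pnn dest: pa_le)
  also have "\<dots> = 4 * \<delta>^2"
    by (simp add: sum_distrib_right[symmetric] rest power2_eq_square)
  finally have up: "avg \<theta> (varb \<theta>) \<le> 4 * \<delta>^2" .
  have cardS: "card (UNIV - {a0} :: 'a set) = CARD('a) - 1" by (simp add: card_Diff_singleton)
  have "gradsq r \<theta> \<ge> (\<Sum>a\<in>UNIV-{a0}. (p a)^2 * (r a - F)^2)"
    unfolding gradsq_def p_def[symmetric] F_def[symmetric] by (rule sum_mono2) auto
  moreover have "(\<Sum>a\<in>UNIV-{a0}. (p a)^2 * (r a - F)^2) \<ge> (\<Sum>a\<in>UNIV-{a0}. (p a)^2 * (\<Delta>/2)^2)"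
  proof (rule sum_mono)
    fix a assume "a \<in> UNIV - {a0}"
    then have "\<Delta>/2 \<le> \<bar>r a - F\<bar>" using far by auto
    then have "(\<Delta>/2)^2 \<le> (r a - F)^2" using Dpos by (metis abs_le_square_iff abs_of_pos half_gt_zero order.trans abs_ge_self le_less)
    then show "(p a)^2 * (\<Delta>/2)^2 \<le> (p a)^2 * (r a - F)^2" by (rule mult_left_mono) simp
  qed
  moreover have "(\<Sum>a\<in>UNIV-{a0}. (p a)^2 * (\<Delta>/2)^2) = (\<Delta>/2)^2 * (\<Sum>a\<in>UNIV-{a0}. (p a)^2)"
    by (simp add: sum_distrib_left mult_ac)
  moreover have "\<delta>^2 \<le> (\<Sum>a\<in>UNIV-{a0}. (p a)^2) * (real CARD('a) - 1)"
    using sum_squared_le_sum_of_squares[of p "UNIV - {a0}"] rest cardS card2 by (simp add: of_nat_diff)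
  ultimately have G1: "(\<Delta>/2)^2 * (\<Sum>a\<in>UNIV-{a0}. (p a)^2) \<le> gradsq r \<theta>" by linarith
  have S2: "(\<Sum>a\<in>UNIV-{a0}. (p a)^2) \<le> gradsq r \<theta> * 4 / \<Delta>^2"
    using G1 Dpos by (simp add: field_simps power2_eq_square)
  have c0: "0 \<le> real CARD('a) - 1" using card2 by simp
  have "\<delta>^2 \<le> (\<Sum>a\<in>UNIV-{a0}. (p a)^2) * (real CARD('a) - 1)" by fact
  also have "\<dots> \<le> (gradsq r \<theta> * 4 / \<Delta>^2) * (real CARD('a) - 1)"
    by (rule mult_right_mono[OF S2 c0])
  finally have "\<delta>^2 \<le> gradsq r \<theta> * 4 / \<Delta>^2 * (real CARD('a) - 1)" .
  then have "4 * \<delta>^2 \<le> 4 * (gradsq r \<theta> * 4 / \<Delta>^2 * (real CARD('a) - 1))"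
    by simp
  also have "\<dots> = 16 * (real CARD('a) - 1) / \<Delta>^2 * gradsq r \<theta>"
    by simp
  finally have "4 * \<delta>^2 \<le> 16 * (real CARD('a) - 1) / \<Delta>^2 * gradsq r \<theta>" .
  then show ?thesis using up by linarith
qed

lemma softmax_le1: "softmax \<theta> a \<le> 1"
proof -
  have "softmax \<theta> a \<le> (\<Sum>c\<in>UNIV. softmax \<theta> c)"
    by (rule member_le_sum) (auto intro: less_imp_le softmax_pos)
  then show ?thesis by (simp add: softmax_sum)
qed

lemma ghat_eq: "ghat \<theta> b R a = R * wv \<theta> b a"
proof -
  have p: "softmax \<theta> c \<noteq> 0" for c using softmax_pos[of \<theta> c] by simp
  have s: "(\<Sum>c\<in>UNIV. softmax \<theta> c * rhat \<theta> b R c) = R"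
  proof -
    have "(\<Sum>c\<in>UNIV. softmax \<theta> c * rhat \<theta> b R c) = (\<Sum>c\<in>UNIV. if b = c then R else 0)"
      by (rule sum.cong) (auto simp: rhat_def p)
    then show ?thesis by simp
  qed
  show ?thesis unfolding ghat_def s wv_def by (auto simp: rhat_def p algebra_simps)
qed

lemma subopt_eq: "subopt r astar \<theta> = r astar - avg \<theta> r"
proof -
  have "subopt r astar \<theta> = (\<Sum>a\<in>UNIV. pistar astar a * r a) - avg \<theta> r"
    unfolding subopt_def avg_def by (simp add: algebra_simps sum_subtractf)
  moreover have "(\<Sum>a\<in>UNIV. pistar astar a * r a) = r astar"
  proof -
    have "(\<Sum>a\<in>UNIV. pistar astar a * r a) = (\<Sum>a\<in>UNIV. if a = astar then r astar else 0)"
      by (rule sum.cong) (auto simp: pistar_def)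
    then show ?thesis by simp
  qed
  ultimately show ?thesis by simp
qed

lemma varb_nonneg: "0 \<le> varb \<theta> b"
  unfolding varb_def by (rule avg_nonneg) simp

lemma path_step:
  fixes r :: "'a::finite \<Rightarrow> real"
  assumes r0: "\<And>a. 0 \<le> r a" and r1: "\<And>a. r a \<le> 1" and R0: "0 \<le> R" and R1: "R \<le> 1" and e0: "0 \<le> \<eta>"
  shows "subopt r astar (\<lambda>a. \<theta> a + \<eta> * ghat \<theta> b R a)
     \<le> subopt r astar \<theta> - \<eta> * R * psi r \<theta> b + exp (2 * \<eta>) / 2 * \<eta>^2 * varb \<theta> b"
proof -
  define v where "v = (\<lambda>a. \<eta> * R * wv \<theta> b a)"
  have th: "(\<lambda>a. \<theta> a + \<eta> * ghat \<theta> b R a) = (\<lambda>a. \<theta> a + v a)"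
    unfolding v_def ghat_eq by (auto simp: mult_ac)
  have wvb: "\<bar>wv \<theta> b a\<bar> \<le> 1" for a
    using softmax_pos[of \<theta> a] softmax_le1[of \<theta> a]
    unfolding wv_def by auto
  have vb: "\<bar>v a\<bar> \<le> \<eta>" for a
  proof -
    have "\<bar>v a\<bar> = \<eta> * R * \<bar>wv \<theta> b a\<bar>" unfolding v_def using e0 R0 by (simp add: abs_mult)
    also have "\<dots> \<le> \<eta> * 1 * 1"
      by (intro mult_mono) (use e0 R0 R1 wvb in auto)
    finally show ?thesis by simp
  qed
  have T: "avg (\<lambda>a. \<theta> a + v a) r \<ge> avg \<theta> r + (avg \<theta> (\<lambda>a. r a * v a) - avg \<theta> r * avg \<theta> v)
            - exp (2*\<eta>)/2 * avg \<theta> (\<lambda>a. (v a - avg \<theta> v)^2)"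
    by (rule taylor_avg[OF r0 r1 vb])
  have cov: "avg \<theta> (\<lambda>a. r a * v a) - avg \<theta> r * avg \<theta> v = \<eta> * R * psi r \<theta> b"
  proof -
    have "avg \<theta> (\<lambda>a. r a * v a) = (\<eta> * R) * avg \<theta> (\<lambda>a. r a * wv \<theta> b a)"
      unfolding v_def avg_cmult[symmetric] by (simp add: mult_ac)
    moreover have "avg \<theta> v = (\<eta> * R) * avg \<theta> (wv \<theta> b)"
      unfolding v_def avg_cmult[symmetric] by (simp add: mult_ac)
    ultimately show ?thesis unfolding psi_def by (simp add: algebra_simps)
  qed
  have var: "avg \<theta> (\<lambda>a. (v a - avg \<theta> v)^2) = (\<eta> * R)^2 * varb \<theta> b"
  proof -
    have "avg \<theta> v = (\<eta> * R) * avg \<theta> (wv \<theta> b)"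
      unfolding v_def avg_cmult[symmetric] by (simp add: mult_ac)
    then have "(\<lambda>a. (v a - avg \<theta> v)^2) = (\<lambda>a. (\<eta> * R)^2 * (wv \<theta> b a - avg \<theta> (wv \<theta> b))^2)"
      unfolding v_def by (auto simp: power2_eq_square algebra_simps)
    then show ?thesis unfolding varb_def by (simp add: avg_cmult)
  qed
  have R2: "(\<eta> * R)^2 \<le> \<eta>^2"
    using R0 R1 e0 by (simp add: power_mult_distrib mult_left_le power_le_one)
  have X: "exp (2*\<eta>)/2 * ((\<eta> * R)^2 * varb \<theta> b) \<le> exp (2*\<eta>)/2 * (\<eta>^2 * varb \<theta> b)"
    by (intro mult_left_mono mult_right_mono R2 varb_nonneg) auto
  have X2: "exp (2*\<eta>)/2 * (\<eta>^2 * varb \<theta> b) = exp (2 * \<eta>) / 2 * \<eta>^2 * varb \<theta> b" by simp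
  have T2: "avg (\<lambda>a. \<theta> a + v a) r \<ge> avg \<theta> r + \<eta> * R * psi r \<theta> b - exp (2*\<eta>)/2 * ((\<eta> * R)^2 * varb \<theta> b)"
    using T unfolding cov var .
  show ?thesis unfolding th subopt_eq using T2 X X2 by linarith
qed

lemma gradsq_lower:
  "gradsq r \<theta> \<ge> (softmax \<theta> astar)^2 * (subopt r astar \<theta>)^2"
proof -
  have "(softmax \<theta> astar)^2 * (r astar - avg \<theta> r)^2 \<le> gradsq r \<theta>"
    unfolding gradsq_def by (rule member_le_sum) auto
  then show ?thesis by (simp add: subopt_eq)
qed

lemma gradsq_upper:
  fixes r :: "'a::finite \<Rightarrow> real"
  assumes r0: "\<And>a. 0 \<le> r a" and r1: "\<And>a. r a \<le> 1" and opt: "\<And>a. r a \<le> r astar"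
  shows "gradsq r \<theta> \<le> subopt r astar \<theta>"
proof -
  have "gradsq r \<theta> \<le> avg \<theta> (\<lambda>a. (r a - avg \<theta> r)^2)"
    unfolding gradsq_def avg_def[of \<theta> "\<lambda>a. (r a - avg \<theta> r)^2"]
  proof (rule sum_mono)
    fix a
    have "softmax \<theta> a * softmax \<theta> a \<le> softmax \<theta> a * 1"
      using softmax_pos[of \<theta> a] softmax_le1[of \<theta> a]
      by (intro mult_left_mono) auto
    then show "(softmax \<theta> a)^2 * (r a - avg \<theta> r)^2 \<le> softmax \<theta> a * (r a - avg \<theta> r)^2"
      by (intro mult_right_mono) (auto simp: power2_eq_square)
  qed
  also have "\<dots> \<le> avg \<theta> (\<lambda>a. (r a - r astar)^2)" by (rule avg_var_min)
  also have "\<dots> \<le> avg \<theta> (\<lambda>a. r astar - r a)"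
  proof (rule avg_mono)
    fix a
    have "0 \<le> r astar - r a" "r astar - r a \<le> 1" using opt[of a] r0[of a] r1[of astar] by auto
    then have "(r astar - r a) * (r astar - r a) \<le> (r astar - r a) * 1" by (intro mult_left_mono) auto
    then show "(r a - r astar)^2 \<le> r astar - r a" by (simp add: power2_eq_square algebra_simps)
  qed
  also have "\<dots> = subopt r astar \<theta>" by (simp add: avg_diff subopt_eq)
  finally show ?thesis .
qed

lemma subopt_bounds:
  fixes r :: "'a::finite \<Rightarrow> real"
  assumes r0: "\<And>a. 0 \<le> r a" and r1: "\<And>a. r a \<le> 1" and opt: "\<And>a. r a \<le> r astar"
  shows "0 \<le> subopt r astar \<theta>" "subopt r astar \<theta> \<le> 1"
proof -
  have "avg \<theta> r \<le> avg \<theta> (\<lambda>a. r astar)" by (rule avg_mono) (rule opt)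
  then show "0 \<le> subopt r astar \<theta>" by (simp add: subopt_eq)
  have "0 \<le> avg \<theta> r" by (rule avg_nonneg) (rule r0)
  then show "subopt r astar \<theta> \<le> 1" using r1[of astar] by (simp add: subopt_eq)
qed

lemma dist_lemma:
  fixes M :: "'w measure" and Pb :: "real measure" and R :: "'w \<Rightarrow> real"
  assumes M: "prob_space M" and Pb: "prob_space Pb" and Pbs: "sets Pb = sets borel"
    and E: "E \<in> sets M" and Rm: "R \<in> borel_measurable M"
    and law: "\<And>S. S \<in> sets borel \<Longrightarrow> measure M (E \<inter> {\<omega>\<in>space M. R \<omega> \<in> S}) = measure M E * measure Pb S"
    and int: "integrable Pb (\<lambda>x. x)"
  shows "(\<integral>\<omega>. indicator E \<omega> * R \<omega> \<partial>M) = measure M E * (\<integral>x. x \<partial>Pb)"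
proof -
  interpret M: prob_space M by (rule M)
  interpret P: prob_space Pb by (rule Pb)
  define D where "D = density M (\<lambda>\<omega>. ennreal (indicator E \<omega>))"
  define Q where "Q = distr D borel R"
  have Dsets: "sets D = sets M" unfolding D_def by simp
  have RmD: "R \<in> borel_measurable D" using Rm by (simp add: D_def)
  have Q_eq: "Q = density Pb (\<lambda>_. ennreal (measure M E))"
  proof (rule measure_eqI)
    show "sets Q = sets (density Pb (\<lambda>_. ennreal (measure M E)))"
      unfolding Q_def using Pbs by simp
  next
    fix S assume "S \<in> sets Q"
    then have S: "S \<in> sets borel" unfolding Q_def by simp
    have pre: "R -` S \<inter> space M \<in> sets M" using Rm S by (rule measurable_sets)
    have "emeasure Q S = emeasure D (R -` S \<inter> space D)"
      unfolding Q_def by (rule emeasure_distr[OF RmD S])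
    also have "\<dots> = (\<integral>\<^sup>+ \<omega>. ennreal (indicator E \<omega>) * indicator (R -` S \<inter> space M) \<omega> \<partial>M)"
      unfolding D_def using pre E by (simp add: emeasure_density)
    also have "\<dots> = (\<integral>\<^sup>+ \<omega>. indicator (E \<inter> (R -` S \<inter> space M)) \<omega> \<partial>M)"
      by (rule nn_integral_cong) (simp add: ennreal_indicator indicator_inter_arith)
    also have "\<dots> = emeasure M (E \<inter> (R -` S \<inter> space M))"
      using pre E by simp
    also have "E \<inter> (R -` S \<inter> space M) = E \<inter> {\<omega>\<in>space M. R \<omega> \<in> S}" by auto
    also have "emeasure M (E \<inter> {\<omega>\<in>space M. R \<omega> \<in> S}) = ennreal (measure M E * measure Pb S)"
      using law[OF S] by (simp add: M.emeasure_eq_measure)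
    also have "\<dots> = ennreal (measure M E) * emeasure Pb S"
      by (simp add: P.emeasure_eq_measure ennreal_mult)
    also have "\<dots> = emeasure (density Pb (\<lambda>_. ennreal (measure M E))) S"
      using S Pbs by (simp add: emeasure_density_const)
    finally show "emeasure Q S = emeasure (density Pb (\<lambda>_. ennreal (measure M E))) S" .
  qed
  have "(\<integral>x. x \<partial>Q) = (\<integral>\<omega>. R \<omega> \<partial>D)"
    unfolding Q_def by (rule integral_distr[OF RmD]) simp
  also have "\<dots> = (\<integral>\<omega>. indicator E \<omega> * R \<omega> \<partial>M)"
    unfolding D_def using Rm E by (subst integral_density) auto
  finally have 1: "(\<integral>x. x \<partial>Q) = (\<integral>\<omega>. indicator E \<omega> * R \<omega> \<partial>M)" .
  have "(\<integral>x. x \<partial>Q) = (\<integral>x. measure M E * x \<partial>Pb)"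
  proof -
    have xm: "(\<lambda>x. x) \<in> borel_measurable Pb" using Pbs by (simp cong: measurable_cong_sets)
    show ?thesis unfolding Q_eq by (subst integral_density[OF xm]) auto
  qed
  also have "\<dots> = measure M E * (\<integral>x. x \<partial>Pb)" by simp
  finally show ?thesis using 1 by simp
qed

lemma cond_lemma:
  fixes M Fs :: "'w measure" and X Y \<phi> :: "'w \<Rightarrow> real" and B C :: real
  assumes M: "prob_space M" and sub: "subalgebra M Fs"
    and Xm: "X \<in> borel_measurable M" and Xb: "AE \<omega> in M. \<bar>X \<omega>\<bar> \<le> B"
    and Ym: "Y \<in> borel_measurable Fs" and Yb: "\<And>\<omega>. \<omega> \<in> space M \<Longrightarrow> \<bar>Y \<omega>\<bar> \<le> B"
    and seteq: "\<And>A. A \<in> sets Fs \<Longrightarrow> (\<integral>\<omega>. indicator A \<omega> * X \<omega> \<partial>M) = (\<integral>\<omega>. indicator A \<omega> * Y \<omega> \<partial>M)"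
    and phim: "\<phi> \<in> borel_measurable Fs" and phib: "\<And>\<omega>. \<omega> \<in> space M \<Longrightarrow> \<bar>\<phi> \<omega>\<bar> \<le> C"
  shows "(\<integral>\<omega>. \<phi> \<omega> * X \<omega> \<partial>M) = (\<integral>\<omega>. \<phi> \<omega> * Y \<omega> \<partial>M)"
proof -
  interpret M: prob_space M by (rule M)
  interpret S: finite_measure_subalgebra M Fs
    by unfold_locales (rule sub)
  have YmM: "Y \<in> borel_measurable M" by (rule measurable_from_subalg[OF sub Ym])
  have phimM: "\<phi> \<in> borel_measurable M" by (rule measurable_from_subalg[OF sub phim])
  have intX: "integrable M X"
    by (rule M.integrable_const_bound[where B=B]) (use Xb Xm in simp_all)
  have intY: "integrable M Y"
    by (rule M.integrable_const_bound[where B=B]) (use Yb YmM in simp_all)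
  obtain \<omega>0 where "\<omega>0 \<in> space M" using M.not_empty by blast
  then have C0: "0 \<le> C" using phib[of \<omega>0] by linarith
  have intPX: "integrable M (\<lambda>\<omega>. \<phi> \<omega> * X \<omega>)"
  proof (rule M.integrable_const_bound[where B="C * B"])
    show "AE x in M. norm (\<phi> x * X x) \<le> C * B"
      using Xb AE_space
    proof eventually_elim
      case (elim x)
      have "\<bar>\<phi> x\<bar> * \<bar>X x\<bar> \<le> C * B"
        by (rule mult_mono) (use elim phib[of x] C0 in simp_all)
      then show ?case by (simp add: abs_mult)
    qed
  qed (use Xm phimM in simp)
  have ae: "AE \<omega> in M. real_cond_exp M Fs X \<omega> = Y \<omega>"
  proof (rule S.real_cond_exp_charact)
    fix A assume "A \<in> sets Fs"
    then show "(LINT x:A|M. X x) = (LINT x:A|M. Y x)"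
      unfolding set_lebesgue_integral_def using seteq by simp
  qed (fact intX intY Ym)+
  have "(\<integral>\<omega>. \<phi> \<omega> * X \<omega> \<partial>M) = (\<integral>\<omega>. \<phi> \<omega> * real_cond_exp M Fs X \<omega> \<partial>M)"
    using S.real_cond_exp_intg(2)[OF intPX phim Xm] by simp
  also have "\<dots> = (\<integral>\<omega>. \<phi> \<omega> * Y \<omega> \<partial>M)"
  proof (rule integral_cong_AE)
    show "AE x in M. \<phi> x * real_cond_exp M Fs X x = \<phi> x * Y x" using ae by eventually_elim simp
  qed (use phimM YmM in simp_all)
  finally show ?thesis .
qed

lemma alpha_facts:
  fixes \<beta> :: real and T :: nat
  assumes b1: "1 \<le> \<beta>" and bT: "\<beta> < real T"
  defines "L \<equiv> ln (real T / \<beta>)" and "\<alpha> \<equiv> (\<beta> / real T) powr (1 / real T)"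
  shows "0 < L" "\<alpha> = exp (- L / real T)" "0 < \<alpha>" "\<alpha> < 1" "1/2 \<le> \<alpha>"
    "\<alpha> ^ T = \<beta> / real T" "1 - \<alpha> \<le> L / real T" "\<And>k. \<alpha> ^ k = exp (- real k * L / real T)"
proof -
  have T0: "real T > 0" using b1 bT by linarith
  have q: "real T / \<beta> > 1" using b1 bT by (simp add: field_simps)
  show L0: "0 < L" unfolding L_def using q by simp
  have lnq: "ln (\<beta> / real T) = - L" unfolding L_def using b1 T0 by (simp add: ln_div)
  show ae: "\<alpha> = exp (- L / real T)" unfolding \<alpha>_def powr_def using b1 T0 lnq by simp
  show "0 < \<alpha>" unfolding ae by simp
  show "\<alpha> < 1" unfolding ae using L0 T0 by simp
  have "real T < 2 ^ T" using less_exp[of T] by (metis of_nat_less_iff of_nat_numeral of_nat_power)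
  then have "ln (real T) \<le> ln (2 ^ T)" using T0 by simp
  also have "\<dots> = real T * ln 2" by (simp add: ln_realpow)
  finally have lnT: "ln (real T) \<le> real T * ln 2" .
  have "L \<le> ln (real T)" unfolding L_def using b1 T0 by (simp add: ln_div)
  then have "L / real T \<le> ln 2" using lnT T0 by (simp add: divide_le_eq mult.commute)
  then have "exp (- ln 2) \<le> exp (- L / real T)" by simp
  then show "1/2 \<le> \<alpha>" unfolding ae by (simp add: exp_minus)
  show pk: "\<And>k. \<alpha> ^ k = exp (- real k * L / real T)"
    unfolding ae by (simp add: exp_of_nat_mult[symmetric])
  have "\<alpha> ^ T = exp (- L)" unfolding pk using T0 by simp
  also have "\<dots> = exp (ln (\<beta> / real T))" by (simp add: lnq)
  also have "\<dots> = \<beta> / real T" using b1 T0 by simp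
  finally show "\<alpha> ^ T = \<beta> / real T" .
  have "1 + (- L / real T) \<le> exp (- L / real T)" by (rule exp_ge_add_one_self)
  then show "1 - \<alpha> \<le> L / real T" unfolding ae by simp
qed

lemma geom_lower:
  fixes \<alpha> L :: real and t T :: nat
  assumes "0 < \<alpha>" "\<alpha> < 1" "1 - \<alpha> \<le> L / real T" "0 < L" "T > 0" "t \<le> T"
  shows "(\<Sum>s\<in>{Suc t..T}. \<alpha> ^ s) \<ge> (\<alpha> ^ Suc t - \<alpha> ^ Suc T) * real T / L"
proof -
  have eq: "(1 - \<alpha>) * (\<Sum>s\<in>{Suc t..T}. \<alpha> ^ s) = \<alpha> ^ Suc t - \<alpha> ^ Suc T"
  proof (cases "Suc t \<le> T")
    case True then show ?thesis by (rule sum_gp_multiplied)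
  next
    case False then have "t = T" using assms by simp
    then show ?thesis by simp
  qed
  have num: "0 \<le> \<alpha> ^ Suc t - \<alpha> ^ Suc T"
    using assms by (simp add: power_decreasing)
  have pos: "0 < 1 - \<alpha>" using assms by simp
  have "(\<alpha> ^ Suc t - \<alpha> ^ Suc T) * real T / L = (\<alpha> ^ Suc t - \<alpha> ^ Suc T) / (L / real T)"
    by simp
  also have "\<dots> \<le> (\<alpha> ^ Suc t - \<alpha> ^ Suc T) / (1 - \<alpha>)"
    by (rule divide_left_mono) (use num pos assms in auto)
  also have "\<dots> = (\<Sum>s\<in>{Suc t..T}. \<alpha> ^ s)" using eq pos by (simp add: field_simps)
  finally show ?thesis .
qed

lemma exp_neg_le_sq:
  fixes x :: real assumes "0 < x"
  shows "exp (- x) \<le> 4 / ((exp 1)^2 * x^2)"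
proof -
  have "1 + (x/2 - 1) \<le> exp (x/2 - 1)" by (rule exp_ge_add_one_self)
  then have "x/2 \<le> exp (x/2) / exp 1" by (simp add: exp_diff)
  then have h: "exp 1 * (x/2) \<le> exp (x/2)" by (simp add: field_simps)
  have "(exp 1 * (x/2))^2 \<le> (exp (x/2))^2"
    by (rule power_mono[OF h]) (use assms in simp)
  also have "(exp (x/2))^2 = exp x" by (simp add: power2_eq_square exp_add[symmetric])
  finally have "(exp 1)^2 * x^2 / 4 \<le> exp x" by (simp add: power_mult_distrib field_simps)
  then have "(exp 1)^2 * x^2 \<le> 4 * exp x" by simp
  moreover have "0 < (exp 1)^2 * x^2" using assms by simp
  ultimately show ?thesis by (simp add: exp_minus field_simps)
qed

lemma unroll:
  fixes G c B :: "nat \<Rightarrow> real" and T :: nat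
  assumes rec: "\<And>t. 1 \<le> t \<Longrightarrow> t \<le> T \<Longrightarrow> G (Suc t) \<le> (1 - c t) * G t + B t * G t"
    and c01: "\<And>t. 0 \<le> c t" "\<And>t. c t \<le> 1" and Gnn: "\<And>t. 0 \<le> G t"
  shows "n \<le> T \<Longrightarrow> G (Suc n) \<le> G 1 * exp (- (\<Sum>s\<in>{1..n}. c s))
            + (\<Sum>t\<in>{1..n}. B t * G t * exp (- (\<Sum>s\<in>{Suc t..n}. c s)))"
proof (induction n)
  case 0 then show ?case by simp
next
  case (Suc n)
  define X where "X = G 1 * exp (- (\<Sum>s\<in>{1..n}. c s)) + (\<Sum>t\<in>{1..n}. B t * G t * exp (- (\<Sum>s\<in>{Suc t..n}. c s)))"
  have IH: "G (Suc n) \<le> X" using Suc by (simp add: X_def)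
  have X0: "0 \<le> X" using IH Gnn[of "Suc n"] by linarith
  have "G (Suc (Suc n)) \<le> (1 - c (Suc n)) * G (Suc n) + B (Suc n) * G (Suc n)"
    using rec[of "Suc n"] Suc.prems by simp
  also have "(1 - c (Suc n)) * G (Suc n) \<le> (1 - c (Suc n)) * X"
    by (rule mult_left_mono[OF IH]) (use c01 in simp)
  also have "(1 - c (Suc n)) * X \<le> exp (- c (Suc n)) * X"
    by (rule mult_right_mono[OF _ X0]) (metis exp_ge_add_one_self uminus_add_conv_diff add.commute)
  also have "exp (- c (Suc n)) * X = G 1 * exp (- (\<Sum>s\<in>{1..Suc n}. c s))
       + (\<Sum>t\<in>{1..n}. B t * G t * exp (- (\<Sum>s\<in>{Suc t..Suc n}. c s)))"
  proof -
    have ex: "exp (- (a + b)) = exp (- b) * exp (- a)" for a b :: real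
      by (simp add: exp_add[symmetric] algebra_simps)
    have s1: "(\<Sum>s\<in>{Suc t..Suc n}. c s) = (\<Sum>s\<in>{Suc t..n}. c s) + c (Suc n)" if "t \<le> n" for t
      using that by (simp add: sum.cl_ivl_Suc)
    have e1: "exp (- c (Suc n)) * exp (- (\<Sum>s\<in>{1..n}. c s)) = exp (- (\<Sum>s\<in>{1..Suc n}. c s))"
    proof -
      have "- (\<Sum>s\<in>{1..Suc n}. c s) = - c (Suc n) + - (\<Sum>s\<in>{1..n}. c s)"
        using s1[of 0] by simp
      then show ?thesis by (simp only: exp_add)
    qed
    have e2: "exp (- c (Suc n)) * (\<Sum>t\<in>{1..n}. B t * G t * exp (- (\<Sum>s\<in>{Suc t..n}. c s)))
        = (\<Sum>t\<in>{1..n}. B t * G t * exp (- (\<Sum>s\<in>{Suc t..Suc n}. c s)))"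
      unfolding sum_distrib_left
    proof (rule sum.cong)
      fix t assume "t \<in> {1..n}"
      then have "t \<le> n" by simp
      then show "exp (- c (Suc n)) * (B t * G t * exp (- (\<Sum>s\<in>{Suc t..n}. c s))) = B t * G t * exp (- (\<Sum>s\<in>{Suc t..Suc n}. c s))"
        unfolding s1[OF \<open>t \<le> n\<close>] ex by (simp add: mult_ac)
    qed simp
    show ?thesis unfolding X_def distrib_left e2 using e1 by (simp add: mult_ac)
  qed
  finally show ?case by simp
qed

lemma scalar_main:
  fixes G D \<eta> :: "nat \<Rightarrow> real" and T :: nat and \<eta>0 \<beta> \<epsilon> A \<Delta> \<rho> \<alpha> \<mu> \<kappa> C1 C2 T0 K :: real
  assumes A2: "2 \<le> A" and Dpos: "0 < \<Delta>"
    and rho_def: "\<rho> = 8 * A powr (3/2) / \<Delta>\<^sup>2"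
    and alpha_def: "\<alpha> = (\<beta> / real T) powr (1 / real T)"
    and eta_def: "\<eta> = (\<lambda>t::nat. \<eta>0 * \<alpha> ^ t)"
    and kappa_def: "\<kappa> = 2 / (\<mu> * \<eta>0)"
    and C1_def: "C1 = exp (2 * \<beta> / (\<kappa> * ln (real T / \<beta>)))"
    and C2_def: "C2 = exp (2 * \<beta> / (\<kappa> * ln (real T / \<beta>)))
               * (32 * \<rho> * \<kappa>\<^sup>2 / (5 * (exp 1)\<^sup>2 * \<alpha>\<^sup>2)) * (ln (real T / \<beta>))\<^sup>2"
    and T0_def: "T0 = real T * max (ln (4 * \<rho> * \<eta>0) / ln (real T / \<beta>)) 0"
    and K_def: "K = 10 * (A - 1) / \<Delta>^2"
    and eta0: "0 < \<eta>0" "\<eta>0 \<le> 1/18" and b1: "1 \<le> \<beta>" and bT: "\<beta> < real T"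
    and eps: "0 < \<epsilon>" "\<epsilon> < 1" and mu: "0 < \<mu>" "\<mu> \<le> 1"
    and step: "\<And>t. 1 \<le> t \<Longrightarrow> t \<le> T \<Longrightarrow> G (Suc t) \<le> G t - \<eta> t * D t + K * (\<eta> t)^2 * D t"
    and Dlow: "\<And>t. 1 \<le> t \<Longrightarrow> t \<le> T \<Longrightarrow> \<mu> * (G t)^2 \<le> D t"
    and Dup: "\<And>t. 1 \<le> t \<Longrightarrow> t \<le> T \<Longrightarrow> D t \<le> G t"
    and Dnn: "\<And>t. 1 \<le> t \<Longrightarrow> t \<le> T \<Longrightarrow> 0 \<le> D t"
    and Gnn: "\<And>t. 0 \<le> G t"
    and Geps: "\<And>t. 1 \<le> t \<Longrightarrow> t \<le> T \<Longrightarrow> \<epsilon> \<le> G t"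
  shows "G (Suc T) \<le> G 1 * C1 * exp (- (\<alpha> * \<epsilon> * real T) / (\<kappa> * ln (real T / \<beta>)))
                       + C2 * (\<Sum>t\<in>{t::nat. 1 \<le> t \<and> real t \<le> T0 - 1}. G t) / (\<epsilon>\<^sup>2 * (real T)\<^sup>2)"
proof -
  define L where "L = ln (real T / \<beta>)"
  have T0': "real T > 0" using b1 bT by linarith
  have L0: "0 < L" and ae: "\<alpha> = exp (- L / real T)" and a0: "0 < \<alpha>" and a1: "\<alpha> < 1"
    and ahalf: "1/2 \<le> \<alpha>" and aT: "\<alpha> ^ T = \<beta> / real T" and oma: "1 - \<alpha> \<le> L / real T"
    and apow: "\<And>k. \<alpha> ^ k = exp (- real k * L / real T)"
    using alpha_facts[OF b1 bT] unfolding L_def[symmetric] alpha_def[symmetric] by auto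
  have kap0: "0 < \<kappa>" unfolding kappa_def using mu eta0 by simp
  have kapinv: "\<eta>0 * \<mu> / 2 = 1 / \<kappa>" unfolding kappa_def using mu eta0 by simp
  define c where "c t = \<eta> t * \<mu> * \<epsilon> / 2" for t
  define bad where "bad t \<longleftrightarrow> 1/2 < K * \<eta> t" for t
  define B where "B t = (if bad t then K * (\<eta> t)^2 else 0)" for t
  have eta_pos: "0 < \<eta> t" for t unfolding eta_def using eta0 a0 by simp
  have eta_le: "\<eta> t \<le> \<eta>0" for t unfolding eta_def using eta0 a0 a1
    by (simp add: power_le_one mult_left_le)
  have K0: "0 \<le> K" unfolding K_def using A2 by simp
  have c0: "0 \<le> c t" for t unfolding c_def using eta_pos[of t] mu eps by simp
  have c1: "c t \<le> 1" for t
  proof -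
    have "\<eta> t * \<mu> \<le> 1 * 1" using eta_le[of t] eta0 mu eta_pos[of t] by (intro mult_mono) auto
    then have "\<eta> t * \<mu> * \<epsilon> \<le> 1 * 1" using eps eta_pos[of t] mu by (intro mult_mono) auto
    then show ?thesis unfolding c_def by simp
  qed
  have B0: "0 \<le> B t" for t unfolding B_def using K0 by simp
  have rec: "G (Suc t) \<le> (1 - c t) * G t + B t * G t" if t: "1 \<le> t" "t \<le> T" for t
  proof -
    have e: "0 < \<eta> t" by (rule eta_pos)
    have G0: "0 \<le> G t" by (rule Gnn)
    have "\<epsilon> * G t \<le> G t * G t" using Geps[OF t] G0 by (intro mult_right_mono) auto
    then have "\<mu> * (\<epsilon> * G t) \<le> \<mu> * (G t)^2" using mu by (simp add: power2_eq_square)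
    also have "\<dots> \<le> D t" by (rule Dlow[OF t])
    finally have "\<eta> t * (\<mu> * (\<epsilon> * G t)) \<le> \<eta> t * D t" using e by simp
    then have cG: "c t * G t \<le> \<eta> t * D t / 2" unfolding c_def by (simp add: mult_ac)
    have Dn: "0 \<le> D t" by (rule Dnn[OF t])
    show ?thesis
    proof (cases "bad t")
      case True
      have "K * (\<eta> t)^2 * D t \<le> K * (\<eta> t)^2 * G t" using Dup[OF t] K0 by (intro mult_left_mono) auto
      moreover have "0 \<le> \<eta> t * D t" using e Dn by simp
      ultimately show ?thesis using step[OF t] cG True unfolding B_def by (simp add: algebra_simps)
    next
      case False
      then have "K * \<eta> t \<le> 1/2" unfolding bad_def by simp
      then have "(K * \<eta> t) * (\<eta> t * D t) \<le> 1/2 * (\<eta> t * D t)" using e Dn by (intro mult_right_mono) auto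
      then have "K * (\<eta> t)^2 * D t \<le> \<eta> t * D t / 2" by (simp add: power2_eq_square mult_ac)
      then show ?thesis using step[OF t] cG False unfolding B_def by (simp add: algebra_simps)
    qed
  qed
  have U: "G (Suc T) \<le> G 1 * exp (- (\<Sum>s\<in>{1..T}. c s))
            + (\<Sum>t\<in>{1..T}. B t * G t * exp (- (\<Sum>s\<in>{Suc t..T}. c s)))"
    using unroll[where G=G and c=c and B=B and T=T and n=T, OF rec c0 c1 Gnn] by auto
  define x where "x t = \<epsilon> * real T * \<alpha> ^ Suc t / (\<kappa> * L)" for t
  have x0: "0 < x t" for t unfolding x_def using eps T0' a0 kap0 L0 by simp
  have lowS: "(\<Sum>s\<in>{Suc t..T}. c s) \<ge> x t - 2 * \<beta> / (\<kappa> * L)" if "t \<le> T" for t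
  proof -
    have "(\<Sum>s\<in>{Suc t..T}. c s) = (\<eta>0 * \<mu> * \<epsilon> / 2) * (\<Sum>s\<in>{Suc t..T}. \<alpha> ^ s)"
      unfolding c_def eta_def sum_distrib_left by (simp add: mult_ac)
    also have "\<dots> \<ge> (\<eta>0 * \<mu> * \<epsilon> / 2) * ((\<alpha> ^ Suc t - \<alpha> ^ Suc T) * real T / L)"
      by (rule mult_left_mono[OF geom_lower]) (use a0 a1 oma L0 T0' that eta0 mu eps in auto)
    also have "(\<eta>0 * \<mu> * \<epsilon> / 2) * ((\<alpha> ^ Suc t - \<alpha> ^ Suc T) * real T / L)
        = x t - \<epsilon> * \<alpha> * \<beta> / (\<kappa> * L)"
    proof -
      have e1: "\<alpha> ^ Suc T = \<alpha> * \<beta> / real T" using aT by simp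
      have e2: "\<eta>0 * \<mu> * \<epsilon> / 2 = \<epsilon> / \<kappa>" using kapinv by (simp add: field_simps)
      show ?thesis unfolding x_def e1 e2 using T0' L0 kap0 by (simp add: field_simps)
    qed
    finally have l1: "x t - \<epsilon> * \<alpha> * \<beta> / (\<kappa> * L) \<le> (\<Sum>s\<in>{Suc t..T}. c s)" .
    have "\<epsilon> * \<alpha> * \<beta> / (\<kappa> * L) \<le> 2 * \<beta> / (\<kappa> * L)"
    proof -
      have "\<epsilon> * \<alpha> \<le> 1 * 1" using eps a0 a1 by (intro mult_mono) auto
      then have "\<epsilon> * \<alpha> * \<beta> \<le> 2 * \<beta>" using b1 by (intro mult_right_mono) auto
      then show ?thesis using kap0 L0 by (intro divide_right_mono) auto
    qed
    then show ?thesis using l1 by linarith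
  qed
  have expS: "exp (- (\<Sum>s\<in>{Suc t..T}. c s)) \<le> C1 * exp (- x t)" if "t \<le> T" for t
  proof -
    have "exp (- (\<Sum>s\<in>{Suc t..T}. c s)) \<le> exp (2 * \<beta> / (\<kappa> * L) + - x t)"
      using lowS[OF that] by simp
    also have "\<dots> = C1 * exp (- x t)" unfolding C1_def L_def[symmetric] exp_add ..
    finally show ?thesis .
  qed
  have first: "G 1 * exp (- (\<Sum>s\<in>{1..T}. c s)) \<le> G 1 * C1 * exp (- (\<alpha> * \<epsilon> * real T) / (\<kappa> * ln (real T / \<beta>)))"
  proof -
    have "exp (- (\<Sum>s\<in>{1..T}. c s)) \<le> C1 * exp (- x 0)" using expS[of 0] by simp
    also have "x 0 = (\<alpha> * \<epsilon> * real T) / (\<kappa> * ln (real T / \<beta>))" unfolding x_def L_def by (simp add: mult_ac)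
    finally show ?thesis using Gnn[of 1] by (simp add: mult_left_mono mult.assoc)
  qed
  define Sset where "Sset = {t::nat. 1 \<le> t \<and> real t \<le> T0 - 1}"
  define f where "f t = C2 / (\<epsilon>\<^sup>2 * (real T)\<^sup>2) * G t" for t
  have C2nn: "0 \<le> C2" unfolding C2_def rho_def using Dpos A2 by simp
  have f0: "0 \<le> f t" for t unfolding f_def using C2nn Gnn[of t] by simp
  have badS: "t \<in> Sset" if t: "1 \<le> t" "t \<le> T" "bad t" for t
  proof -
    define y where "y = \<eta>0 * \<alpha> ^ t"
    have y0: "0 < y" unfolding y_def using eta0 a0 by simp
    have "1/2 < K * y" using t(3) unfolding bad_def eta_def y_def by simp
    then have h1: "\<Delta>^2 < 20 * (A - 1) * y" unfolding K_def using Dpos by (simp add: field_simps)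
    have sA: "7/5 \<le> sqrt A"
    proof -
      have "sqrt ((7/5)^2) \<le> sqrt A" using A2 by (intro real_sqrt_le_mono) (simp add: power2_eq_square)
      then show ?thesis by simp
    qed
    have Apow: "A powr (3/2) = A * sqrt A"
    proof -
      have "A powr (3/2) = A powr (1 + 1/2)" by simp
      also have "\<dots> = A powr 1 * A powr (1/2)" by (rule powr_add)
      also have "\<dots> = A * sqrt A" using A2 by (simp add: powr_half_sqrt)
      finally show ?thesis .
    qed
    have "4 * \<rho> * \<eta>0 * \<alpha> ^ Suc t = 32 * (A * sqrt A) * y * \<alpha> / \<Delta>^2"
      unfolding rho_def Apow y_def by (simp add: field_simps)
    also have "\<dots> \<ge> 32 * (A * (7/5)) * y * (1/2) / \<Delta>^2"
      using sA ahalf A2 y0 Dpos by (intro divide_right_mono mult_mono mult_left_mono) auto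
    finally have "4 * \<rho> * \<eta>0 * \<alpha> ^ Suc t \<ge> 112 / 5 * A * y / \<Delta>^2" by simp
    moreover have "112 / 5 * A * y / \<Delta>^2 > 1"
    proof -
      have "20 * (A - 1) * y \<le> 112 / 5 * A * y" using y0 A2 by (intro mult_right_mono) auto
      then have "\<Delta>^2 < 112 / 5 * A * y" using h1 by linarith
      then show ?thesis using Dpos by simp
    qed
    ultimately have big: "1 < 4 * \<rho> * \<eta>0 * \<alpha> ^ Suc t" by linarith
    have "0 < \<rho>" unfolding rho_def using A2 Dpos by simp
    then have rp: "0 < 4 * \<rho> * \<eta>0" using eta0 by simp
    have "0 < ln (4 * \<rho> * \<eta>0 * \<alpha> ^ Suc t)" using big by (rule ln_gt_zero)
    also have "ln (4 * \<rho> * \<eta>0 * \<alpha> ^ Suc t) = ln (4 * \<rho> * \<eta>0) + ln (\<alpha> ^ Suc t)"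
      by (rule ln_mult_pos[OF rp zero_less_power[OF a0]])
    also have "ln (\<alpha> ^ Suc t) = - real (Suc t) * L / real T" by (simp only: apow ln_exp)
    finally have hh: "0 < ln (4 * \<rho> * \<eta>0) + - real (Suc t) * L / real T" .
    have "- real (Suc t) * L / real T = - (real (Suc t) * L / real T)" by (simp only: minus_mult_left minus_divide_left)
    then have "real (Suc t) * L / real T \<le> ln (4 * \<rho> * \<eta>0)" using hh by linarith
    then have "real (Suc t) \<le> real T * (ln (4 * \<rho> * \<eta>0) / L)"
      using T0' L0 by (simp add: field_simps)
    also have "\<dots> \<le> T0" unfolding T0_def L_def[symmetric] using T0' by (intro mult_left_mono) auto
    finally show ?thesis unfolding Sset_def using t by simp
  qed
  have termb: "B t * G t * exp (- (\<Sum>s\<in>{Suc t..T}. c s)) \<le> (if bad t then f t else 0)"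
    if t: "1 \<le> t" "t \<le> T" for t
  proof (cases "bad t")
    case False then show ?thesis unfolding B_def by simp
  next
    case True
    define a where "a = \<alpha> ^ t"
    have a0': "0 < a" unfolding a_def using a0 by simp
    have "B t * exp (- (\<Sum>s\<in>{Suc t..T}. c s)) \<le> K * (\<eta> t)^2 * (C1 * exp (- x t))"
    proof -
      have "B t = K * (\<eta> t)^2" unfolding B_def using True by simp
      moreover have "0 \<le> K * (\<eta> t)^2" using K0 by simp
      ultimately show ?thesis using expS[of t] t by (simp add: mult_left_mono)
    qed
    also have "\<dots> \<le> K * (\<eta> t)^2 * (C1 * (4 / ((exp 1)^2 * (x t)^2)))"
      using exp_neg_le_sq[OF x0[of t]] K0 unfolding C1_def by (intro mult_left_mono) auto
    also have "\<dots> = C1 * (4 * K * \<eta>0^2) * (\<kappa>^2 * L^2 / ((exp 1)^2 * \<epsilon>^2 * (real T)^2 * \<alpha>^2))"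
      unfolding x_def eta_def a_def[symmetric] using a0' a0 eps T0' kap0 L0
      by (simp add: field_simps power2_eq_square a_def)
    also have "\<dots> \<le> C1 * (32 * \<rho> / 5) * (\<kappa>^2 * L^2 / ((exp 1)^2 * \<epsilon>^2 * (real T)^2 * \<alpha>^2))"
    proof -
      have "A - 1 \<le> A powr (3/2)"
      proof -
        have "A powr 1 \<le> A powr (3/2)" using A2 by (intro powr_mono) auto
        then show ?thesis using A2 by simp
      qed
      moreover have "\<eta>0^2 \<le> (1/18)^2" using eta0 by (intro power_mono) auto
      moreover have "0 \<le> A - 1" using A2 by simp
      ultimately have "(A - 1) * \<eta>0^2 \<le> A powr (3/2) * (1/18)^2"
        by (intro mult_mono) auto
      then have h4: "40 * ((A - 1) * \<eta>0^2) \<le> 40 * (A powr (3/2) * (1/18)^2)" by simp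
      have h5: "40 * (A powr (3/2) * (1/18)^2) \<le> 256 * A powr (3/2) / 5"
        using powr_ge_zero[of A "3/2"] by (simp add: power2_eq_square)
      have "4 * K * \<eta>0^2 = 40 * ((A - 1) * \<eta>0^2) / \<Delta>^2" unfolding K_def by simp
      also have "\<dots> \<le> (256 * A powr (3/2) / 5) / \<Delta>^2"
        by (rule divide_right_mono) (use h4 h5 in auto)
      also have "\<dots> = 32 * \<rho> / 5" unfolding rho_def by simp
      finally have "4 * K * \<eta>0^2 \<le> 32 * \<rho> / 5" .
      then show ?thesis unfolding C1_def using kap0 L0 eps T0' a0
        by (intro mult_right_mono mult_left_mono) auto
    qed
    also have "\<dots> = C2 / (\<epsilon>\<^sup>2 * (real T)\<^sup>2)"
      unfolding C2_def C1_def L_def[symmetric] using eps T0' a0 by (simp add: field_simps)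
    finally have "B t * exp (- (\<Sum>s\<in>{Suc t..T}. c s)) \<le> C2 / (\<epsilon>\<^sup>2 * (real T)\<^sup>2)" .
    then have "B t * exp (- (\<Sum>s\<in>{Suc t..T}. c s)) * G t \<le> C2 / (\<epsilon>\<^sup>2 * (real T)\<^sup>2) * G t"
      using Gnn[of t] by (rule mult_right_mono)
    then show ?thesis using True unfolding f_def by (simp add: mult_ac)
  qed
  have finS: "finite Sset"
  proof (rule finite_subset)
    show "Sset \<subseteq> {..nat (ceiling T0)}"
    proof
      fix t assume "t \<in> Sset"
      then have "real t \<le> T0" unfolding Sset_def by simp
      then have "real t \<le> real (nat (ceiling T0))" by linarith
      then show "t \<in> {..nat (ceiling T0)}" by simp
    qed
  qed simp
  have "(\<Sum>t\<in>{1..T}. B t * G t * exp (- (\<Sum>s\<in>{Suc t..T}. c s))) \<le> (\<Sum>t\<in>{1..T}. if bad t then f t else 0)"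
    by (rule sum_mono) (use termb in auto)
  also have "\<dots> = (\<Sum>t\<in>{t\<in>{1..T}. bad t}. f t)" by (rule sum.inter_filter[symmetric]) simp
  also have "\<dots> \<le> (\<Sum>t\<in>Sset. f t)"
    by (rule sum_mono2[OF finS]) (use badS f0 in auto)
  also have "\<dots> = C2 * (\<Sum>t\<in>Sset. G t) / (\<epsilon>\<^sup>2 * (real T)\<^sup>2)"
    unfolding f_def sum_distrib_left[symmetric] by simp
  finally show ?thesis using U first unfolding Sset_def by linarith
qed

lemma meas_softmax:
  assumes th: "\<And>a. (\<lambda>\<omega>. th \<omega> a) \<in> borel_measurable N"
  shows "(\<lambda>\<omega>. softmax (th \<omega>) a) \<in> borel_measurable N"
  unfolding softmax_def using th by measurable

lemma meas_avg:
  assumes th: "\<And>a. (\<lambda>\<omega>. th \<omega> a) \<in> borel_measurable N"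
    and h: "\<And>a. (\<lambda>\<omega>. h \<omega> a) \<in> borel_measurable N"
  shows "(\<lambda>\<omega>. avg (th \<omega>) (h \<omega>)) \<in> borel_measurable N"
proof -
  note [measurable] = meas_softmax[OF th] h
  show ?thesis unfolding avg_def by measurable
qed

lemma meas_wv:
  assumes th: "\<And>a. (\<lambda>\<omega>. th \<omega> a) \<in> borel_measurable N"
  shows "(\<lambda>\<omega>. wv (th \<omega>) b a) \<in> borel_measurable N"
proof -
  note [measurable] = meas_softmax[OF th]
  show ?thesis unfolding wv_def by measurable
qed

lemma meas_psi:
  assumes th: "\<And>a. (\<lambda>\<omega>. th \<omega> a) \<in> borel_measurable N"
  shows "(\<lambda>\<omega>. psi r (th \<omega>) b) \<in> borel_measurable N"
proof -
  have 1: "(\<lambda>\<omega>. avg (th \<omega>) (\<lambda>a. r a * wv (th \<omega>) b a)) \<in> borel_measurable N"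
    by (rule meas_avg[OF th]) (use meas_wv[OF th] in measurable)
  have 2: "(\<lambda>\<omega>. avg (th \<omega>) r) \<in> borel_measurable N" by (rule meas_avg[OF th]) simp
  have 3: "(\<lambda>\<omega>. avg (th \<omega>) (wv (th \<omega>) b)) \<in> borel_measurable N" by (rule meas_avg[OF th meas_wv[OF th]])
  show ?thesis unfolding psi_def using 1 2 3 by measurable
qed

lemma meas_varb:
  assumes th: "\<And>a. (\<lambda>\<omega>. th \<omega> a) \<in> borel_measurable N"
  shows "(\<lambda>\<omega>. varb (th \<omega>) b) \<in> borel_measurable N"
proof -
  have 3: "(\<lambda>\<omega>. avg (th \<omega>) (wv (th \<omega>) b)) \<in> borel_measurable N" by (rule meas_avg[OF th meas_wv[OF th]])
  show ?thesis unfolding varb_def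
    by (rule meas_avg[OF th]) (use meas_wv[OF th] 3 in measurable)
qed

lemma meas_gradsq:
  assumes th: "\<And>a. (\<lambda>\<omega>. th \<omega> a) \<in> borel_measurable N"
  shows "(\<lambda>\<omega>. gradsq r (th \<omega>)) \<in> borel_measurable N"
proof -
  note [measurable] = meas_softmax[OF th]
  have 2: "(\<lambda>\<omega>. avg (th \<omega>) r) \<in> borel_measurable N" by (rule meas_avg[OF th]) simp
  show ?thesis unfolding gradsq_def using 2 by measurable
qed

lemma meas_subopt:
  assumes th: "\<And>a. (\<lambda>\<omega>. th \<omega> a) \<in> borel_measurable N"
  shows "(\<lambda>\<omega>. subopt r astar (th \<omega>)) \<in> borel_measurable N"
proof -
  have 2: "(\<lambda>\<omega>. avg (th \<omega>) r) \<in> borel_measurable N" by (rule meas_avg[OF th]) simp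
  show ?thesis unfolding subopt_eq using 2 by measurable
qed

lemma avg_abs_le: "(\<And>a. \<bar>h a\<bar> \<le> B) \<Longrightarrow> \<bar>avg \<theta> h\<bar> \<le> B"
proof -
  assume h: "\<And>a. \<bar>h a\<bar> \<le> B"
  have "avg \<theta> h \<le> avg \<theta> (\<lambda>a. B)"
  proof (rule avg_mono)
    fix a show "h a \<le> B" using h[of a] by (auto simp: abs_le_iff)
  qed
  moreover have "avg \<theta> (\<lambda>a. - B) \<le> avg \<theta> h"
  proof (rule avg_mono)
    fix a show "- B \<le> h a" using h[of a] by (auto simp: abs_le_iff)
  qed
  ultimately show ?thesis by simp
qed

lemma wv_abs: "\<bar>wv \<theta> b a\<bar> \<le> 1"
  using softmax_pos[of \<theta> a] softmax_le1[of \<theta> a] unfolding wv_def by auto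

lemma psi_abs:
  assumes "\<And>a. 0 \<le> r a" "\<And>a. r a \<le> 1"
  shows "\<bar>psi r \<theta> b\<bar> \<le> 2"
proof -
  have 1: "\<bar>avg \<theta> (\<lambda>a. r a * wv \<theta> b a)\<bar> \<le> 1"
  proof (rule avg_abs_le)
    fix a show "\<bar>r a * wv \<theta> b a\<bar> \<le> 1"
      using assms(1)[of a] assms(2)[of a] wv_abs[of \<theta> b a] by (simp add: abs_mult mult_le_one)
  qed
  have 2: "\<bar>avg \<theta> r\<bar> \<le> 1" by (rule avg_abs_le) (use assms in auto)
  have 3: "\<bar>avg \<theta> (wv \<theta> b)\<bar> \<le> 1" by (rule avg_abs_le) (rule wv_abs)
  have "\<bar>avg \<theta> r * avg \<theta> (wv \<theta> b)\<bar> \<le> 1" using 2 3 by (simp add: abs_mult mult_le_one)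
  then show ?thesis unfolding psi_def using 1 by linarith
qed

lemma varb_le: "varb \<theta> b \<le> 4"
proof -
  have 3: "\<bar>avg \<theta> (wv \<theta> b)\<bar> \<le> 1" by (rule avg_abs_le) (rule wv_abs)
  have "\<bar>(wv \<theta> b a - avg \<theta> (wv \<theta> b))^2\<bar> \<le> 4" for a
  proof -
    have "\<bar>wv \<theta> b a - avg \<theta> (wv \<theta> b)\<bar> \<le> 2" using wv_abs[of \<theta> b a] 3 by linarith
    then have "\<bar>wv \<theta> b a - avg \<theta> (wv \<theta> b)\<bar>^2 \<le> 2^2" by (intro power_mono) auto
    then show ?thesis by simp
  qed
  then have "\<bar>varb \<theta> b\<bar> \<le> 4" unfolding varb_def by (rule avg_abs_le)
  then show ?thesis by simp
qed

lemma gradsq_nonneg: "0 \<le> gradsq r \<theta>"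
  unfolding gradsq_def by (rule sum_nonneg) simp

theorem corollary1:
  fixes M :: "'w measure"
    and F :: "nat \<Rightarrow> 'w measure"
    and P :: "'a::finite \<Rightarrow> real measure"
    and r :: "'a \<Rightarrow> real"
    and astar :: 'a
    and arm :: "nat \<Rightarrow> 'w \<Rightarrow> 'a"
    and Rew :: "nat \<Rightarrow> 'w \<Rightarrow> real"
    and theta :: "nat \<Rightarrow> 'w \<Rightarrow> ('a \<Rightarrow> real)"
    and \<theta>1 :: "'a \<Rightarrow> real"
    and T :: nat
    and \<eta>0 \<beta> \<epsilon> :: real
    and A \<Delta> \<rho> \<alpha> \<mu> \<kappa> C1 C2 T0 :: real
    and \<eta> G :: "nat \<Rightarrow> real"
  assumes A_def: "A = real CARD('a)"
    and Delta_def: "\<Delta> = reward_gap r"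
    and rho_def: "\<rho> = 8 * A powr (3/2) / \<Delta>\<^sup>2"
    and alpha_def: "\<alpha> = (\<beta> / real T) powr (1 / real T)"
    and eta_def: "\<eta> = (\<lambda>t::nat. \<eta>0 * \<alpha> ^ t)"
    and G_def: "G = (\<lambda>t::nat. \<integral>\<omega>. subopt r astar (theta t \<omega>) \<partial>M)"
    and mu_def: "\<mu> = 1 / (\<integral>\<omega>. Max ((\<lambda>t. 1 / (softmax (theta t \<omega>) astar)\<^sup>2) ` {1..T}) \<partial>M)"
    and kappa_def: "\<kappa> = 2 / (\<mu> * \<eta>0)"
    and C1_def: "C1 = exp (2 * \<beta> / (\<kappa> * ln (real T / \<beta>)))"
    and C2_def: "C2 = exp (2 * \<beta> / (\<kappa> * ln (real T / \<beta>)))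
               * (32 * \<rho> * \<kappa>\<^sup>2 / (5 * (exp 1)\<^sup>2 * \<alpha>\<^sup>2)) * (ln (real T / \<beta>))\<^sup>2"
    and T0_def: "T0 = real T * max (ln (4 * \<rho> * \<eta>0) / ln (real T / \<beta>)) 0"
    and arms: "CARD('a) \<ge> 2"
    (* reward distributions: probability measures on the reals supported in [0,1] *)
    and P_prob: "\<And>a. prob_space (P a)"
    and P_sets: "\<And>a. sets (P a) = sets borel"
    and P_supp: "\<And>a. AE x in P a. 0 \<le> x \<and> x \<le> 1"
    and r_mean: "\<And>a. r a = (\<integral>x. x \<partial>P a)"
    and astar_opt: "\<And>a. r a \<le> r astar"
    and Delta_pos: "\<Delta> > 0"
    (* underlying probability space and filtration (F t = information before round t) *)
    and M_prob: "prob_space M"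
    and F_sub: "\<And>t. subalgebra M (F t)"
    and F_mono: "\<And>s t. s \<le> t \<Longrightarrow> sets (F s) \<subseteq> sets (F t)"
    and arm_meas: "\<And>t. arm t \<in> measurable (F (Suc t)) (count_space UNIV)"
    and Rew_meas: "\<And>t. Rew t \<in> borel_measurable (F (Suc t))"
    (* a_t ~ pi_{theta_t} conditionally on the past *)
    and arm_law: "\<And>t a B. t \<ge> 1 \<Longrightarrow> B \<in> sets (F t) \<Longrightarrow>
        measure M (B \<inter> {\<omega>\<in>space M. arm t \<omega> = a})
          = (\<integral>\<omega>. indicator B \<omega> * softmax (theta t \<omega>) a \<partial>M)"
    (* R_t ~ P_{a_t} conditionally on the past and on a_t *)
    and Rew_law: "\<And>t a B S. t \<ge> 1 \<Longrightarrow> B \<in> sets (F t) \<Longrightarrow> S \<in> sets borel \<Longrightarrow>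
        measure M (B \<inter> {\<omega>\<in>space M. arm t \<omega> = a} \<inter> {\<omega>\<in>space M. Rew t \<omega> \<in> S})
          = measure M (B \<inter> {\<omega>\<in>space M. arm t \<omega> = a}) * measure (P a) S"
    (* stochastic softmax policy gradient iterates *)
    and theta_init: "\<And>\<omega>. \<omega> \<in> space M \<Longrightarrow> theta 1 \<omega> = \<theta>1"
    and theta_step: "\<And>t \<omega>. t \<ge> 1 \<Longrightarrow> \<omega> \<in> space M \<Longrightarrow>
        theta (Suc t) \<omega> = (\<lambda>a. theta t \<omega> a + \<eta> t * ghat (theta t \<omega>) (arm t \<omega>) (Rew t \<omega>) a)"
    (* parameters *)
    and eta0_pos: "\<eta>0 > 0"
    and eta0_le: "\<eta>0 \<le> 1 / 18"
    and beta_ge: "\<beta> \<ge> 1"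
    and beta_lt_T: "\<beta> < real T"
    and eps: "0 < \<epsilon>" "\<epsilon> < 1"
    and mu_pos: "\<mu> > 0"
  shows "((\<forall>t\<in>{1..T}. G t \<ge> \<epsilon>) \<longrightarrow>
           G (Suc T) \<le> G 1 * C1 * exp (- (\<alpha> * \<epsilon> * real T) / (\<kappa> * ln (real T / \<beta>)))
                       + C2 * (\<Sum>t\<in>{t::nat. 1 \<le> t \<and> real t \<le> T0 - 1}. G t) / (\<epsilon>\<^sup>2 * (real T)\<^sup>2))
       \<and> (\<not> (\<forall>t\<in>{1..T}. G t \<ge> \<epsilon>) \<longrightarrow> Min (G ` {1..T}) \<le> \<epsilon>)"
proof -
  interpret M: prob_space M by (rule M_prob)
  have spF: "space (F t) = space M" for t using F_sub[of t] by (simp add: subalgebra_def)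
  have setsF: "sets (F t) \<subseteq> sets M" for t using F_sub[of t] by (simp add: subalgebra_def)
  have liftF: "f \<in> borel_measurable (F t)" if "f \<in> borel_measurable (F s)" "s \<le> t"
    for f :: "'w \<Rightarrow> real" and s t
    using measurable_mono[of borel borel "F s" "F t"] F_mono[OF that(2)] spF that(1) by auto
  have toM: "f \<in> borel_measurable M" if "f \<in> borel_measurable (F t)" for f :: "'w \<Rightarrow> real" and t
    by (rule measurable_from_subalg[OF F_sub that])
  have Pm: "(\<lambda>x. x) \<in> borel_measurable (P a)" for a using P_sets[of a] by (simp cong: measurable_cong_sets)
  have intP: "integrable (P a) (\<lambda>x::real. x)" for a
  proof -
    interpret Pa: prob_space "P a" by (rule P_prob)
    show ?thesis
    proof (rule Pa.integrable_const_bound[where B=1])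
      show "AE x in P a. norm x \<le> 1" using P_supp[of a] by eventually_elim auto
    qed (rule Pm)
  qed
  have r0: "0 \<le> r a" for a
  proof -
    have "AE x in P a. 0 \<le> x" using P_supp[of a] by eventually_elim auto
    then show ?thesis unfolding r_mean by (rule integral_nonneg_AE)
  qed
  have r1: "r a \<le> 1" for a
  proof -
    interpret Pa: prob_space "P a" by (rule P_prob)
    have "r a \<le> (\<integral>x. 1 \<partial>P a)" unfolding r_mean
      by (rule integral_mono_AE[OF intP]) (use P_supp[of a] in auto)
    also have "\<dots> = 1" using Pa.prob_space by simp
    finally show ?thesis .
  qed
  have gap: "\<Delta> \<le> \<bar>r a - r b\<bar>" if "a \<noteq> b" for a b
  proof -
    have fin: "finite {\<bar>r a - r b\<bar> | a b. a \<noteq> b}"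
      by (rule finite_subset[of _ "(\<lambda>(a,b). \<bar>r a - r b\<bar>) ` UNIV"]) auto
    show ?thesis unfolding Delta_def reward_gap_def by (rule Min_le[OF fin]) (use that in auto)
  qed
  have A2: "2 \<le> A" using arms A_def by simp
  have Tpos: "0 < real T" using beta_ge beta_lt_T by linarith
  have alpha_pos: "0 < \<alpha>" unfolding alpha_def using beta_ge Tpos by simp
  have eta_nn: "0 \<le> \<eta> t" for t unfolding eta_def using eta0_pos alpha_pos by simp
  have alpha_le1: "\<alpha> \<le> 1"
    using alpha_facts(4)[OF beta_ge beta_lt_T] unfolding alpha_def by simp
  have eta_le: "\<eta> t \<le> 1/18" for t
  proof -
    have "\<alpha> ^ t \<le> 1" using alpha_pos alpha_le1 by (simp add: power_le_one)
    then have "\<eta>0 * \<alpha> ^ t \<le> \<eta>0 * 1" using eta0_pos by (intro mult_left_mono) auto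
    then show ?thesis unfolding eta_def using eta0_le by simp
  qed
  define E where "E t b = {\<omega>\<in>space M. arm t \<omega> = b}" for t b
  have ESuc: "E t b \<in> sets (F (Suc t))" for t b
  proof -
    have "arm t -` {b} \<inter> space (F (Suc t)) \<in> sets (F (Suc t))"
      by (rule measurable_sets[OF arm_meas]) simp
    moreover have "arm t -` {b} \<inter> space (F (Suc t)) = E t b" unfolding E_def spF by auto
    ultimately show ?thesis by simp
  qed
  have EM: "E t b \<in> sets M" for t b using ESuc setsF by auto
  have indm: "(\<lambda>\<omega>. if arm t \<omega> = a then 1 else 0 :: real) \<in> borel_measurable (F (Suc t))" for t a
    by (rule measurable_compose[OF arm_meas]) simp
  have thetam: "\<forall>a. (\<lambda>\<omega>. theta t \<omega> a) \<in> borel_measurable (F t)" if "1 \<le> t" for t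
    using that
  proof (induction t rule: dec_induct)
    case base
    show ?case
    proof
      fix a
      have "(\<lambda>\<omega>. \<theta>1 a) \<in> borel_measurable (F 1)" by simp
      then show "(\<lambda>\<omega>. theta 1 \<omega> a) \<in> borel_measurable (F 1)"
      proof (rule measurable_cong[THEN iffD1, rotated])
        fix w assume "w \<in> space (F 1)"
        then have "theta 1 w = \<theta>1" using theta_init spF by simp
        then show "\<theta>1 a = theta 1 w a" by simp
      qed
    qed
  next
    case (step n)
    show ?case
    proof
      fix a
      have th': "(\<lambda>\<omega>. theta n \<omega> c) \<in> borel_measurable (F (Suc n))" for c
        using liftF[OF step.IH[rule_format] le_SucI[OF order.refl]] .
      have Rm: "Rew n \<in> borel_measurable (F (Suc n))" by (rule Rew_meas)
      have "(\<lambda>\<omega>. theta n \<omega> a + \<eta> n * (Rew n \<omega> * ((if arm n \<omega> = a then 1 else 0) - softmax (theta n \<omega>) a)))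
          \<in> borel_measurable (F (Suc n))"
      proof -
        note [measurable] = th' Rm indm[of n a] meas_softmax[OF th', where a=a]
        show ?thesis by measurable
      qed
      then show "(\<lambda>\<omega>. theta (Suc n) \<omega> a) \<in> borel_measurable (F (Suc n))"
        by (rule measurable_cong[THEN iffD1, rotated])
           (use step.hyps in \<open>simp add: spF theta_step ghat_eq wv_def\<close>)
    qed
  qed
  have thetaM: "(\<lambda>\<omega>. theta t \<omega> a) \<in> borel_measurable M" if "1 \<le> t" for t a
    using toM thetam[OF that] by blast
  have Rew01: "AE \<omega> in M. 0 \<le> Rew t \<omega> \<and> Rew t \<omega> \<le> 1" if t1: "1 \<le> t" for t
  proof -
    define S where "S = {x::real. \<not> (0 \<le> x \<and> x \<le> 1)}"
    have Sb: "S \<in> sets borel" unfolding S_def by measurable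
    have PS: "measure (P a) S = 0" for a
    proof -
      have spP: "space (P a) = UNIV" using sets_eq_imp_space_eq[OF P_sets[of a]] by simp
      have S1: "S \<in> sets (P a)" using Sb P_sets[of a] by simp
      have S2: "{x\<in>space (P a). \<not> (0 \<le> x \<and> x \<le> 1)} = S" unfolding S_def spP by simp
      have "emeasure (P a) S = 0" using AE_iff_measurable[OF S1 S2] P_supp[of a] by simp
      then show ?thesis by (simp add: measure_def)
    qed
    have RmM: "Rew t \<in> borel_measurable M" using toM[OF Rew_meas] .
    have spFt: "space M \<in> sets (F t)" using sets.top[of "F t"] spF by simp
    define N where "N = {\<omega>\<in>space M. Rew t \<omega> \<in> S}"
    have NM: "N \<in> sets M"
    proof -
      have "Rew t -` S \<inter> space M \<in> sets M" by (rule measurable_sets[OF RmM Sb])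
      moreover have "Rew t -` S \<inter> space M = N" unfolding N_def by auto
      ultimately show ?thesis by simp
    qed
    have Na: "measure M (space M \<inter> {\<omega>\<in>space M. arm t \<omega> = a} \<inter> {\<omega>\<in>space M. Rew t \<omega> \<in> S}) = 0" for a
      using Rew_law[OF t1 spFt Sb, of a] PS[of a] by simp
    have Nun: "N = (\<Union>a. space M \<inter> {\<omega>\<in>space M. arm t \<omega> = a} \<inter> {\<omega>\<in>space M. Rew t \<omega> \<in> S})"
      unfolding N_def by auto
    have "measure M N \<le> (\<Sum>a\<in>UNIV. measure M (space M \<inter> {\<omega>\<in>space M. arm t \<omega> = a} \<inter> {\<omega>\<in>space M. Rew t \<omega> \<in> S}))"
      unfolding Nun
    proof (rule M.finite_measure_subadditive_finite)
      show "(\<lambda>a. space M \<inter> {\<omega>\<in>space M. arm t \<omega> = a} \<inter> {\<omega>\<in>space M. Rew t \<omega> \<in> S}) ` UNIV \<subseteq> sets M"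
      proof (rule image_subsetI)
        fix a
        have "space M \<inter> {\<omega>\<in>space M. arm t \<omega> = a} \<inter> {\<omega>\<in>space M. Rew t \<omega> \<in> S} = E t a \<inter> N"
          unfolding E_def N_def by blast
        then show "space M \<inter> {\<omega>\<in>space M. arm t \<omega> = a} \<inter> {\<omega>\<in>space M. Rew t \<omega> \<in> S} \<in> sets M"
          using EM[of t a] NM by simp
      qed
    qed simp
    then have "measure M N = 0" using Na by (simp add: measure_nonneg antisym)
    then have "N \<in> null_sets M" using NM by (simp add: M.emeasure_eq_measure null_sets_def)
    then show ?thesis by (rule AE_I') (auto simp: N_def S_def)
  qed
  have RmM: "Rew t \<in> borel_measurable M" for t using toM[OF Rew_meas] .
  have smF: "(\<lambda>\<omega>. softmax (theta t \<omega>) b) \<in> borel_measurable (F t)" if "1 \<le> t" for t b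
    by (rule meas_softmax) (use thetam[OF that] in auto)
  have sm_abs: "\<bar>softmax \<theta> b\<bar> \<le> 1" for \<theta> :: "'a \<Rightarrow> real" and b
    using softmax_pos[of \<theta> b] softmax_le1[of \<theta> b] by simp
  have key_b: "(\<integral>\<omega>. f \<omega> * indicator (E t b) \<omega> \<partial>M) = (\<integral>\<omega>. f \<omega> * softmax (theta t \<omega>) b \<partial>M)"
    if t1: "1 \<le> t" and fm: "f \<in> borel_measurable (F t)" and fb: "\<And>\<omega>. \<omega> \<in> space M \<Longrightarrow> \<bar>f \<omega>\<bar> \<le> C"
    for t b f C
  proof (rule cond_lemma[OF M_prob F_sub[of t], where B=1 and C=C])
    show "indicator (E t b) \<in> borel_measurable M" using EM[of t b] by simp
    show "AE \<omega> in M. \<bar>indicator (E t b) \<omega>\<bar> \<le> (1::real)" by (rule AE_I2) (simp add: indicator_def)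
    show "(\<lambda>\<omega>. softmax (theta t \<omega>) b) \<in> borel_measurable (F t)" by (rule smF[OF t1])
    show "\<And>\<omega>. \<omega> \<in> space M \<Longrightarrow> \<bar>softmax (theta t \<omega>) b\<bar> \<le> 1" by (rule sm_abs)
    fix A assume A: "A \<in> sets (F t)"
    have AM: "A \<in> sets M" using A setsF by auto
    have "(\<integral>\<omega>. indicator A \<omega> * indicator (E t b) \<omega> \<partial>M) = measure M (A \<inter> E t b \<inter> space M)"
      by (simp add: indicator_inter_arith[symmetric])
    also have "A \<inter> E t b \<inter> space M = A \<inter> E t b" unfolding E_def by auto
    also have "measure M (A \<inter> E t b) = (\<integral>\<omega>. indicator A \<omega> * softmax (theta t \<omega>) b \<partial>M)"
      unfolding E_def by (rule arm_law[OF t1 A])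
    finally show "(\<integral>\<omega>. indicator A \<omega> * indicator (E t b) \<omega> \<partial>M) = (\<integral>\<omega>. indicator A \<omega> * softmax (theta t \<omega>) b \<partial>M)" .
  qed (use fm fb in auto)
  have key_R: "(\<integral>\<omega>. f \<omega> * (indicator (E t b) \<omega> * Rew t \<omega>) \<partial>M) = (\<integral>\<omega>. f \<omega> * (softmax (theta t \<omega>) b * r b) \<partial>M)"
    if t1: "1 \<le> t" and fm: "f \<in> borel_measurable (F t)" and fb: "\<And>\<omega>. \<omega> \<in> space M \<Longrightarrow> \<bar>f \<omega>\<bar> \<le> C"
    for t b f C
  proof (rule cond_lemma[OF M_prob F_sub[of t], where B=1 and C=C])
    show "(\<lambda>\<omega>. indicator (E t b) \<omega> * Rew t \<omega>) \<in> borel_measurable M" using EM[of t b] RmM[of t] by simp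
    show "AE \<omega> in M. \<bar>indicator (E t b) \<omega> * Rew t \<omega>\<bar> \<le> (1::real)"
      using Rew01[OF t1] by eventually_elim (simp add: indicator_def)
    show "(\<lambda>\<omega>. softmax (theta t \<omega>) b * r b) \<in> borel_measurable (F t)" using smF[OF t1, of b] by simp
    show "\<bar>softmax (theta t \<omega>) b * r b\<bar> \<le> 1" for \<omega>
      using sm_abs[of "theta t \<omega>" b] r0[of b] r1[of b] by (simp add: abs_mult mult_le_one)
    fix A assume A: "A \<in> sets (F t)"
    have AM: "A \<in> sets M" using A setsF by auto
    have AE: "A \<inter> E t b \<in> sets M" using AM EM[of t b] by simp
    have law: "measure M ((A \<inter> E t b) \<inter> {\<omega>\<in>space M. Rew t \<omega> \<in> S}) = measure M (A \<inter> E t b) * measure (P b) S"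
      if "S \<in> sets borel" for S
      unfolding E_def by (rule Rew_law[OF t1 A that])
    have "(\<integral>\<omega>. indicator A \<omega> * (indicator (E t b) \<omega> * Rew t \<omega>) \<partial>M) = (\<integral>\<omega>. indicator (A \<inter> E t b) \<omega> * Rew t \<omega> \<partial>M)"
      by (simp add: indicator_inter_arith[symmetric] mult.assoc[symmetric])
    also have "\<dots> = measure M (A \<inter> E t b) * r b"
      unfolding r_mean by (rule dist_lemma[OF M_prob P_prob P_sets AE RmM law intP])
    also have "measure M (A \<inter> E t b) = (\<integral>\<omega>. indicator A \<omega> * softmax (theta t \<omega>) b \<partial>M)"
      unfolding E_def by (rule arm_law[OF t1 A])
    also have "(\<integral>\<omega>. indicator A \<omega> * softmax (theta t \<omega>) b \<partial>M) * r b = (\<integral>\<omega>. indicator A \<omega> * (softmax (theta t \<omega>) b * r b) \<partial>M)"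
      by (simp only: mult.assoc[symmetric] integral_mult_left_zero)
    finally show "(\<integral>\<omega>. indicator A \<omega> * (indicator (E t b) \<omega> * Rew t \<omega>) \<partial>M) = (\<integral>\<omega>. indicator A \<omega> * (softmax (theta t \<omega>) b * r b) \<partial>M)" .
  qed (use fm fb in auto)
  have psiF: "(\<lambda>\<omega>. psi r (theta t \<omega>) b) \<in> borel_measurable (F t)" if "1 \<le> t" for t b
    by (rule meas_psi) (use thetam[OF that] in auto)
  have varbF: "(\<lambda>\<omega>. varb (theta t \<omega>) b) \<in> borel_measurable (F t)" if "1 \<le> t" for t b
    by (rule meas_varb) (use thetam[OF that] in auto)
  have gsqM: "(\<lambda>\<omega>. gradsq r (theta t \<omega>)) \<in> borel_measurable M" if "1 \<le> t" for t
    by (rule meas_gradsq) (use thetaM[OF that] in auto)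
  have subM: "(\<lambda>\<omega>. subopt r astar (theta t \<omega>)) \<in> borel_measurable M" if "1 \<le> t" for t
    by (rule meas_subopt) (use thetaM[OF that] in auto)
  have intb: "integrable M f" if "f \<in> borel_measurable M" "AE \<omega> in M. \<bar>f \<omega>\<bar> \<le> B"
    for f :: "'w \<Rightarrow> real" and B
    by (rule M.integrable_const_bound[where B=B]) (use that in auto)
  have sub01: "0 \<le> subopt r astar \<theta>" "subopt r astar \<theta> \<le> 1" for \<theta>
    using subopt_bounds[of r astar \<theta>, OF r0 r1 astar_opt] by auto
  have gsq01: "0 \<le> gradsq r \<theta>" "gradsq r \<theta> \<le> 1" for \<theta>
    using gradsq_nonneg[of r \<theta>] gradsq_upper[of r astar \<theta>, OF r0 r1 astar_opt] sub01[of \<theta>] by auto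
  have intsub: "integrable M (\<lambda>\<omega>. subopt r astar (theta t \<omega>))" if "1 \<le> t" for t
    by (rule intb[OF subM[OF that], of 1]) (use sub01 in auto)
  have intgsq: "integrable M (\<lambda>\<omega>. gradsq r (theta t \<omega>))" if "1 \<le> t" for t
    by (rule intb[OF gsqM[OF that], of 1]) (use gsq01 in auto)
  define D where "D t = (\<integral>\<omega>. gradsq r (theta t \<omega>) \<partial>M)" for t
  define K where "K = 10 * (A - 1) / \<Delta>^2"
  have Dnn: "0 \<le> D t" for t unfolding D_def by (rule integral_nonneg_AE, rule AE_I2) (use gsq01 in auto)
  have Gnn: "0 \<le> G t" for t unfolding G_def by (rule integral_nonneg_AE, rule AE_I2) (use sub01 in auto)
  have Dup: "D t \<le> G t" if "1 \<le> t" for t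
    unfolding D_def G_def
    by (rule integral_mono[OF intgsq[OF that] intsub[OF that]])
       (rule gradsq_upper[where r=r and astar=astar, OF r0 r1 astar_opt])
  have step: "G (Suc t) \<le> G t - \<eta> t * D t + K * (\<eta> t)^2 * D t" if t1: "1 \<le> t" for t
  proof -
    define c where "c = exp (2 * \<eta> t) / 2 * (\<eta> t)^2"
    define psiA where "psiA \<omega> = (\<Sum>b\<in>UNIV. psi r (theta t \<omega>) b * (indicator (E t b) \<omega> * Rew t \<omega>))" for \<omega>
    define varA where "varA \<omega> = (\<Sum>b\<in>UNIV. varb (theta t \<omega>) b * indicator (E t b) \<omega>)" for \<omega>
    have psiA_eq: "psiA \<omega> = Rew t \<omega> * psi r (theta t \<omega>) (arm t \<omega>)" if "\<omega> \<in> space M" for \<omega>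
    proof -
      have "psiA \<omega> = (\<Sum>b\<in>UNIV. if b = arm t \<omega> then psi r (theta t \<omega>) b * Rew t \<omega> else 0)"
        unfolding psiA_def by (rule sum.cong) (auto simp: E_def that indicator_def)
      then show ?thesis by simp
    qed
    have varA_eq: "varA \<omega> = varb (theta t \<omega>) (arm t \<omega>)" if "\<omega> \<in> space M" for \<omega>
    proof -
      have "varA \<omega> = (\<Sum>b\<in>UNIV. if b = arm t \<omega> then varb (theta t \<omega>) b else 0)"
        unfolding varA_def by (rule sum.cong) (auto simp: E_def that indicator_def)
      then show ?thesis by simp
    qed
    have psiAm: "psiA \<in> borel_measurable M"
    proof -
      have "(\<lambda>\<omega>. psi r (theta t \<omega>) b) \<in> borel_measurable M" for b using toM[OF psiF[OF t1]] .
      note [measurable] = this EM RmM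
      show ?thesis unfolding psiA_def by measurable
    qed
    have varAm: "varA \<in> borel_measurable M"
    proof -
      have "(\<lambda>\<omega>. varb (theta t \<omega>) b) \<in> borel_measurable M" for b using toM[OF varbF[OF t1]] .
      note [measurable] = this EM
      show ?thesis unfolding varA_def by measurable
    qed
    have intpsiA: "integrable M psiA"
    proof (rule intb[OF psiAm, of 2])
      show "AE \<omega> in M. \<bar>psiA \<omega>\<bar> \<le> 2"
        using Rew01[OF t1] AE_space
      proof eventually_elim
        case (elim \<omega>)
        have "\<bar>Rew t \<omega>\<bar> * \<bar>psi r (theta t \<omega>) (arm t \<omega>)\<bar> \<le> 1 * 2"
          using elim psi_abs[OF r0 r1] by (intro mult_mono) auto
        then show ?case using psiA_eq[OF elim(2)] by (simp add: abs_mult)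
      qed
    qed
    have intvarA: "integrable M varA"
    proof (rule intb[OF varAm, of 4])
      show "AE \<omega> in M. \<bar>varA \<omega>\<bar> \<le> 4"
        using AE_space
      proof eventually_elim
        case (elim \<omega>)
        then show ?case using varA_eq[OF elim] varb_nonneg[of "theta t \<omega>" "arm t \<omega>"] varb_le[of "theta t \<omega>" "arm t \<omega>"] by simp
      qed
    qed
    have path: "AE \<omega> in M. subopt r astar (theta (Suc t) \<omega>) \<le> subopt r astar (theta t \<omega>) - \<eta> t * psiA \<omega> + c * varA \<omega>"
      using Rew01[OF t1] AE_space
    proof eventually_elim
      case (elim \<omega>)
      have "subopt r astar (theta (Suc t) \<omega>) = subopt r astar (\<lambda>a. theta t \<omega> a + \<eta> t * ghat (theta t \<omega>) (arm t \<omega>) (Rew t \<omega>) a)"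
        using theta_step[OF t1 elim(2)] by simp
      also have "\<dots> \<le> subopt r astar (theta t \<omega>) - \<eta> t * Rew t \<omega> * psi r (theta t \<omega>) (arm t \<omega>)
          + exp (2 * \<eta> t) / 2 * (\<eta> t)^2 * varb (theta t \<omega>) (arm t \<omega>)"
        by (rule path_step[OF r0 r1]) (use elim eta_nn in auto)
      also have "\<dots> = subopt r astar (theta t \<omega>) - \<eta> t * psiA \<omega> + c * varA \<omega>"
        unfolding psiA_eq[OF elim(2)] varA_eq[OF elim(2)] c_def by (simp add: mult.assoc)
      finally show ?case .
    qed
    have "G (Suc t) \<le> (\<integral>\<omega>. subopt r astar (theta t \<omega>) - \<eta> t * psiA \<omega> + c * varA \<omega> \<partial>M)"
      unfolding G_def
      by (rule integral_mono_AE[OF intsub[of "Suc t"] _ path]) (use intsub[OF t1] intpsiA intvarA in auto)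
    also have "\<dots> = G t - \<eta> t * (\<integral>\<omega>. psiA \<omega> \<partial>M) + c * (\<integral>\<omega>. varA \<omega> \<partial>M)"
      unfolding G_def using intsub[OF t1] intpsiA intvarA by simp
    finally have I1: "G (Suc t) \<le> G t - \<eta> t * (\<integral>\<omega>. psiA \<omega> \<partial>M) + c * (\<integral>\<omega>. varA \<omega> \<partial>M)" .
    have I2: "(\<integral>\<omega>. psiA \<omega> \<partial>M) = D t"
    proof -
      have "(\<integral>\<omega>. psiA \<omega> \<partial>M) = (\<Sum>b\<in>UNIV. (\<integral>\<omega>. psi r (theta t \<omega>) b * (indicator (E t b) \<omega> * Rew t \<omega>) \<partial>M))"
        unfolding psiA_def
      proof (rule Bochner_Integration.integral_sum[where f="\<lambda>b \<omega>. psi r (theta t \<omega>) b * (indicator (E t b) \<omega> * Rew t \<omega>)"])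
        fix b
        show "integrable M (\<lambda>\<omega>. psi r (theta t \<omega>) b * (indicator (E t b) \<omega> * Rew t \<omega>))"
        proof (rule intb[of _ 2])
          show "(\<lambda>\<omega>. psi r (theta t \<omega>) b * (indicator (E t b) \<omega> * Rew t \<omega>)) \<in> borel_measurable M"
            using toM[OF psiF[OF t1]] EM RmM by measurable
          show "AE \<omega> in M. \<bar>psi r (theta t \<omega>) b * (indicator (E t b) \<omega> * Rew t \<omega>)\<bar> \<le> 2"
            using Rew01[OF t1]
          proof eventually_elim
            case (elim \<omega>)
            have "\<bar>psi r (theta t \<omega>) b\<bar> * \<bar>indicator (E t b) \<omega> * Rew t \<omega>\<bar> \<le> 2 * 1"
              using elim psi_abs[OF r0 r1] by (intro mult_mono) (auto simp: indicator_def)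
            then show ?case by (simp add: abs_mult)
          qed
        qed
      qed
      also have "\<dots> = (\<Sum>b\<in>UNIV. (\<integral>\<omega>. psi r (theta t \<omega>) b * (softmax (theta t \<omega>) b * r b) \<partial>M))"
      proof (rule sum.cong[OF refl])
        fix b
        show "(\<integral>\<omega>. psi r (theta t \<omega>) b * (indicator (E t b) \<omega> * Rew t \<omega>) \<partial>M) = (\<integral>\<omega>. psi r (theta t \<omega>) b * (softmax (theta t \<omega>) b * r b) \<partial>M)"
          by (rule key_R[of t "\<lambda>\<omega>. psi r (theta t \<omega>) b" 2 b, OF t1 psiF[OF t1]]) (rule psi_abs[OF r0 r1])
      qed
      also have "\<dots> = (\<integral>\<omega>. (\<Sum>b\<in>UNIV. psi r (theta t \<omega>) b * (softmax (theta t \<omega>) b * r b)) \<partial>M)"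
      proof (rule Bochner_Integration.integral_sum[where f="\<lambda>b \<omega>. psi r (theta t \<omega>) b * (softmax (theta t \<omega>) b * r b)", symmetric])
        fix b
        show "integrable M (\<lambda>\<omega>. psi r (theta t \<omega>) b * (softmax (theta t \<omega>) b * r b))"
        proof (rule intb[of _ 2])
          show "(\<lambda>\<omega>. psi r (theta t \<omega>) b * (softmax (theta t \<omega>) b * r b)) \<in> borel_measurable M"
            using toM[OF psiF[OF t1]] toM[OF smF[OF t1]] by measurable
          show "AE \<omega> in M. \<bar>psi r (theta t \<omega>) b * (softmax (theta t \<omega>) b * r b)\<bar> \<le> 2"
          proof (rule AE_I2)
            fix \<omega>
            have "\<bar>psi r (theta t \<omega>) b\<bar> * \<bar>softmax (theta t \<omega>) b * r b\<bar> \<le> 2 * 1"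
              using psi_abs[OF r0 r1] sm_abs r0[of b] r1[of b]
              by (intro mult_mono) (auto simp: abs_mult mult_le_one)
            then show "\<bar>psi r (theta t \<omega>) b * (softmax (theta t \<omega>) b * r b)\<bar> \<le> 2" by (simp add: abs_mult)
          qed
        qed
      qed
      also have "\<dots> = D t"
        unfolding D_def
      proof (rule Bochner_Integration.integral_cong[OF refl])
        fix \<omega>
        have "(\<Sum>b\<in>UNIV. psi r (theta t \<omega>) b * (softmax (theta t \<omega>) b * r b)) = avg (theta t \<omega>) (\<lambda>b. r b * psi r (theta t \<omega>) b)"
          unfolding avg_def by (rule sum.cong) (auto simp: mult_ac)
        then show "(\<Sum>b\<in>UNIV. psi r (theta t \<omega>) b * (softmax (theta t \<omega>) b * r b)) = gradsq r (theta t \<omega>)"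
          by (simp add: grad_identity)
      qed
      finally show ?thesis .
    qed
    have I3: "(\<integral>\<omega>. varA \<omega> \<partial>M) \<le> 16 * (A - 1) / \<Delta>^2 * D t"
    proof -
      have "(\<integral>\<omega>. varA \<omega> \<partial>M) = (\<Sum>b\<in>UNIV. (\<integral>\<omega>. varb (theta t \<omega>) b * indicator (E t b) \<omega> \<partial>M))"
        unfolding varA_def
      proof (rule Bochner_Integration.integral_sum[where f="\<lambda>b \<omega>. varb (theta t \<omega>) b * indicator (E t b) \<omega>"])
        fix b
        show "integrable M (\<lambda>\<omega>. varb (theta t \<omega>) b * indicator (E t b) \<omega>)"
        proof (rule intb[of _ 4])
          show "(\<lambda>\<omega>. varb (theta t \<omega>) b * indicator (E t b) \<omega>) \<in> borel_measurable M"
            using toM[OF varbF[OF t1]] EM by measurable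
          show "AE \<omega> in M. \<bar>varb (theta t \<omega>) b * indicator (E t b) \<omega>\<bar> \<le> 4"
          proof (rule AE_I2)
            fix \<omega>
            have "\<bar>varb (theta t \<omega>) b\<bar> \<le> 4" using varb_nonneg[of "theta t \<omega>" b] varb_le[of "theta t \<omega>" b] by simp
            then show "\<bar>varb (theta t \<omega>) b * indicator (E t b) \<omega>\<bar> \<le> 4" by (simp add: indicator_def)
          qed
        qed
      qed
      also have "\<dots> = (\<Sum>b\<in>UNIV. (\<integral>\<omega>. varb (theta t \<omega>) b * softmax (theta t \<omega>) b \<partial>M))"
      proof (rule sum.cong[OF refl])
        fix b
        show "(\<integral>\<omega>. varb (theta t \<omega>) b * indicator (E t b) \<omega> \<partial>M) = (\<integral>\<omega>. varb (theta t \<omega>) b * softmax (theta t \<omega>) b \<partial>M)"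
          by (rule key_b[of t "\<lambda>\<omega>. varb (theta t \<omega>) b" 4 b, OF t1 varbF[OF t1]])
             (use varb_nonneg[of "theta t _" b] varb_le[of "theta t _" b] in auto)
      qed
      also have "\<dots> = (\<integral>\<omega>. avg (theta t \<omega>) (varb (theta t \<omega>)) \<partial>M)"
      proof -
        have "(\<integral>\<omega>. avg (theta t \<omega>) (varb (theta t \<omega>)) \<partial>M) = (\<integral>\<omega>. (\<Sum>b\<in>UNIV. varb (theta t \<omega>) b * softmax (theta t \<omega>) b) \<partial>M)"
          unfolding avg_def by (simp add: mult_ac)
        also have "\<dots> = (\<Sum>b\<in>UNIV. (\<integral>\<omega>. varb (theta t \<omega>) b * softmax (theta t \<omega>) b \<partial>M))"
        proof (rule Bochner_Integration.integral_sum[where f="\<lambda>b \<omega>. varb (theta t \<omega>) b * softmax (theta t \<omega>) b"])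
          fix b
          show "integrable M (\<lambda>\<omega>. varb (theta t \<omega>) b * softmax (theta t \<omega>) b)"
          proof (rule intb[of _ 4])
            show "(\<lambda>\<omega>. varb (theta t \<omega>) b * softmax (theta t \<omega>) b) \<in> borel_measurable M"
              using toM[OF varbF[OF t1]] toM[OF smF[OF t1]] by measurable
            show "AE \<omega> in M. \<bar>varb (theta t \<omega>) b * softmax (theta t \<omega>) b\<bar> \<le> 4"
            proof (rule AE_I2)
              fix \<omega>
              have "\<bar>varb (theta t \<omega>) b\<bar> * \<bar>softmax (theta t \<omega>) b\<bar> \<le> 4 * 1"
                using varb_nonneg[of "theta t \<omega>" b] varb_le[of "theta t \<omega>" b] sm_abs[of "theta t \<omega>" b] by (intro mult_mono) auto
              then show "\<bar>varb (theta t \<omega>) b * softmax (theta t \<omega>) b\<bar> \<le> 4" by (simp add: abs_mult)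
            qed
          qed
        qed
        finally show ?thesis by simp
      qed
      also have "\<dots> \<le> (\<integral>\<omega>. 16 * (A - 1) / \<Delta>^2 * gradsq r (theta t \<omega>) \<partial>M)"
      proof (rule integral_mono)
        show "integrable M (\<lambda>\<omega>. avg (theta t \<omega>) (varb (theta t \<omega>)))"
        proof (rule intb[of _ 4])
          show "(\<lambda>\<omega>. avg (theta t \<omega>) (varb (theta t \<omega>))) \<in> borel_measurable M"
            by (rule meas_avg) (use thetaM[OF t1] toM[OF varbF[OF t1]] in auto)
          show "AE \<omega> in M. \<bar>avg (theta t \<omega>) (varb (theta t \<omega>))\<bar> \<le> 4"
          proof (rule AE_I2, rule avg_abs_le)
            fix \<omega> b
            show "\<bar>varb (theta t \<omega>) b\<bar> \<le> 4" using varb_nonneg[of "theta t \<omega>" b] varb_le[of "theta t \<omega>" b] by simp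
          qed
        qed
        show "integrable M (\<lambda>\<omega>. 16 * (A - 1) / \<Delta>^2 * gradsq r (theta t \<omega>))"
          using intgsq[OF t1] by simp
        fix \<omega>
        show "avg (theta t \<omega>) (varb (theta t \<omega>)) \<le> 16 * (A - 1) / \<Delta>^2 * gradsq r (theta t \<omega>)"
          using noise_bound[OF gap Delta_pos arms] unfolding A_def by simp
      qed
      also have "\<dots> = 16 * (A - 1) / \<Delta>^2 * D t" unfolding D_def by simp
      finally show ?thesis .
    qed
    have c0: "0 \<le> c" unfolding c_def by simp
    have cle: "c \<le> 5/8 * (\<eta> t)^2"
    proof -
      have "exp (2 * \<eta> t) \<le> 1 + 2 * \<eta> t + (2 * \<eta> t)^2"
        by (rule exp_bound) (use eta_nn[of t] eta_le[of t] in auto)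
      also have "\<dots> \<le> 5/4"
      proof -
        have "(2 * \<eta> t)^2 \<le> (1/9)^2" using eta_nn[of t] eta_le[of t] by (intro power_mono) auto
        then show ?thesis using eta_le[of t] by (simp add: power2_eq_square)
      qed
      finally have e: "exp (2 * \<eta> t) \<le> 5/4" .
      have "exp (2 * \<eta> t) / 2 * (\<eta> t)^2 \<le> (5/4) / 2 * (\<eta> t)^2"
        by (intro mult_right_mono divide_right_mono e) auto
      then show ?thesis unfolding c_def by simp
    qed
    have "c * (\<integral>\<omega>. varA \<omega> \<partial>M) \<le> c * (16 * (A - 1) / \<Delta>^2 * D t)"
      by (rule mult_left_mono[OF I3 c0])
    also have "\<dots> \<le> (5/8 * (\<eta> t)^2) * (16 * (A - 1) / \<Delta>^2 * D t)"
      by (rule mult_right_mono[OF cle]) (use A2 Dnn[of t] in simp)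
    also have "\<dots> = K * (\<eta> t)^2 * D t" unfolding K_def using Delta_pos by (simp add: field_simps)
    finally have "c * (\<integral>\<omega>. varA \<omega> \<partial>M) \<le> K * (\<eta> t)^2 * D t" .
    then show ?thesis using I1 I2 by simp
  qed
  define Mx where "Mx \<omega> = Max ((\<lambda>t. 1 / (softmax (theta t \<omega>) astar)\<^sup>2) ` {1..T})" for \<omega>
  have T1: "1 \<le> T" using Tpos by simp
  have IMx: "(\<integral>\<omega>. Mx \<omega> \<partial>M) = 1 / \<mu>"
  proof -
    have "1 / \<mu> = 1 / (1 / (\<integral>\<omega>. Mx \<omega> \<partial>M))" unfolding mu_def Mx_def ..
    then show ?thesis by simp
  qed
  have intMx: "integrable M Mx"
  proof (rule ccontr)
    assume "\<not> integrable M Mx"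
    then have "(\<integral>\<omega>. Mx \<omega> \<partial>M) = 0" by (rule not_integrable_integral_eq)
    then show False using IMx mu_pos by simp
  qed
  have Mx_ge: "1 / (softmax (theta t \<omega>) astar)\<^sup>2 \<le> Mx \<omega>" if "t \<in> {1..T}" for t \<omega>
    unfolding Mx_def by (rule Max_ge) (use that in auto)
  have inv_ge1: "1 \<le> 1 / (softmax \<theta> astar)\<^sup>2" for \<theta>
  proof -
    have "(softmax \<theta> astar)\<^sup>2 \<le> 1" using softmax_pos[of \<theta> astar] softmax_le1[of \<theta> astar]
      by (simp add: power_le_one)
    moreover have "0 < (softmax \<theta> astar)\<^sup>2" using softmax_pos[of \<theta> astar] by simp
    ultimately show ?thesis by simp
  qed
  have mu_le1: "\<mu> \<le> 1"
  proof -
    have "(\<integral>\<omega>. 1 \<partial>M) \<le> (\<integral>\<omega>. Mx \<omega> \<partial>M)"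
    proof (rule integral_mono[OF _ intMx])
      fix \<omega>
      show "1 \<le> Mx \<omega>" using inv_ge1[of "theta 1 \<omega>"] Mx_ge[of 1 \<omega>] T1 by simp
    qed simp
    then have "1 \<le> 1 / \<mu>" using IMx M.prob_space by simp
    then show ?thesis using mu_pos by (simp add: field_simps)
  qed
  show ?thesis
  proof (intro conjI impI)
    assume H: "\<forall>t\<in>{1..T}. \<epsilon> \<le> G t"
    have Geps: "\<epsilon> \<le> G t" if "1 \<le> t" "t \<le> T" for t using H that by auto
    have Dlow: "\<mu> * (G t)^2 \<le> D t" if t: "1 \<le> t" "t \<le> T" for t
    proof -
      have Gp: "0 < G t" using Geps[OF t] eps by linarith
      define l where "l = 1 / (\<mu> * G t)"
      have l0: "0 < l" unfolding l_def using mu_pos Gp by simp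
      have pw: "2 * subopt r astar (theta t \<omega>) \<le> l * gradsq r (theta t \<omega>) + Mx \<omega> / l" if "\<omega> \<in> space M" for \<omega>
      proof -
        define p where "p = softmax (theta t \<omega>) astar"
        define g where "g = subopt r astar (theta t \<omega>)"
        have p0: "0 < p" unfolding p_def by (rule softmax_pos)
        have "0 \<le> (l * p^2 * g - 1)^2" by simp
        then have "2 * (l * p^2) * g \<le> (l * p^2)^2 * g^2 + 1" by (simp add: power2_eq_square algebra_simps)
        then have "2 * g \<le> l * (p^2 * g^2) + 1 / (l * p^2)"
          using l0 p0 by (simp add: field_simps power2_eq_square)
        also have "l * (p^2 * g^2) \<le> l * gradsq r (theta t \<omega>)"
          using gradsq_lower[where r=r and \<theta>="theta t \<omega>" and astar=astar] l0 unfolding p_def g_def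
          by (intro mult_left_mono) (auto simp: power_mult_distrib)
        also have "1 / (l * p^2) \<le> Mx \<omega> / l"
        proof -
          have "1 / p^2 \<le> Mx \<omega>" using Mx_ge[of t \<omega>] t unfolding p_def by simp
          then show ?thesis using l0 by (simp add: field_simps)
        qed
        finally show ?thesis unfolding g_def by simp
      qed
      have "2 * G t \<le> (\<integral>\<omega>. l * gradsq r (theta t \<omega>) + Mx \<omega> / l \<partial>M)"
        unfolding G_def
        by (subst integral_mult_right_zero[symmetric], rule integral_mono)
           (use intsub[OF t(1)] intgsq[OF t(1)] intMx pw in auto)
      also have "\<dots> = l * D t + (1 / \<mu>) / l"
        unfolding D_def using intgsq[OF t(1)] intMx IMx by simp
      also have "\<dots> = D t / (\<mu> * G t) + G t"
        unfolding l_def using mu_pos Gp by (simp add: field_simps)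
      finally have "G t \<le> D t / (\<mu> * G t)" by simp
      then show ?thesis using mu_pos Gp by (simp add: field_simps power2_eq_square)
    qed
    show "G (Suc T) \<le> G 1 * C1 * exp (- (\<alpha> * \<epsilon> * real T) / (\<kappa> * ln (real T / \<beta>)))
                       + C2 * (\<Sum>t\<in>{t::nat. 1 \<le> t \<and> real t \<le> T0 - 1}. G t) / (\<epsilon>\<^sup>2 * (real T)\<^sup>2)"
      by (rule scalar_main[OF A2 Delta_pos rho_def alpha_def eta_def kappa_def C1_def C2_def T0_def K_def
            eta0_pos eta0_le beta_ge beta_lt_T eps mu_pos mu_le1 step Dlow Dup Dnn Gnn Geps])
  next
    assume "\<not> (\<forall>t\<in>{1..T}. \<epsilon> \<le> G t)"
    then obtain t where t: "t \<in> {1..T}" "G t < \<epsilon>" by auto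
    have "Min (G ` {1..T}) \<le> G t" by (rule Min_le) (use t in auto)
    then show "Min (G ` {1..T}) \<le> \<epsilon>" using t(2) by linarith
  qed
qed

end
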